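(* Let $(\mathcal{C},\mathbb{E},\mathfrak{s})$ be an extriangulated category and $\mathcal{I}$ an ideal of $\mathcal{C}$. Consider: (a) there is an additive subfunctor $\mathbb{F}\subseteq\mathbb{E}$ having enough injective objects with $\mathcal{I}=\mathrm{Ph}(\mathbb{F})$; (a') there is an additive subfunctor $\mathbb{F}\subseteq\mathbb{E}$ having enough special injective objects with $\mathcal{I}=\mathrm{Ph}(\mathbb{F})$; (b) $\mathcal{I}$ is an object-special precovering ideal; (c) $\mathcal{I}^\star$ has enough special injective objects and $\mathcal{I}=\mathrm{Ph}(\mathcal{I}^\star)$; (d) $\mathcal{I}$ is a special precovering ideal and $\mathcal{I}^{\perp_{\mathbb{E}}}$ is an object ideal. Then: (I) if $\mathcal{C}$ has enough projective morphisms, (a) (and hence (a')) implies (b); (II) if $\mathcal{C}$ has enough injective objects, (b) implies (c); (III) if $\mathcal{C}$ has enough projective morphisms, (c) implies (d); (IV) (d) implies (b); (V) (c) implies (a').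
   Context: An extriangulated category $(\mathcal{C},\mathbb{E},\mathfrak{s})$ (Nakaoka–Palu): additive $\mathcal{C}$, biadditive $\mathbb{E}:\mathcal{C}^{\mathrm{op}}\times\mathcal{C}\to\mathrm{Ab}$, additive realization $\mathfrak{s}$ assigning to each $\delta\in\mathbb{E}(C,A)$ an equivalence class of sequences $A\to B\to C$, forming $\mathbb{E}$-triangles $A\to B\to C\overset{\delta}{\dashrightarrow}$, satisfying (ET1)–(ET4), (ET3)$^{\mathrm{op}}$, (ET4)$^{\mathrm{op}}$. Notation $a_\star\delta=\mathbb{E}(C,a)(\delta)$, $c^\star\delta=\mathbb{E}(c,A)(\delta)$; a morphism of $\mathbb{E}$-triangles is a commuting triple $(a,b,c)$ with $a_\star\delta=c^\star\delta'$. Enough injective objects: every $A$ admits an $\mathbb{E}$-triangle $A\to E\to C\overset{\delta}{\dashrightarrow}$ with $\mathbb{E}(-,E)=0$. Enough projective morphisms: every $C$ admits an $\mathbb{E}$-triangle $K\to P\xrightarrow{p}C\overset{\gamma}{\dashrightarrow}$ with $p^\star\delta=0$ for all $\delta\in\mathbb{E}(C,A)$. Ideal: class of morphisms with zeros, closed under sums and two-sided composition. Additive subfunctor $\mathbb{F}$: subgroups $\mathbb{F}(C,A)\subseteq\mathbb{E}(C,A)$ stable under $a_\star,c^\star$; $\mathbb{F}$-triangles have extension in $\mathbb{F}$, $\mathbb{F}$-inflations are their first morphisms. $\mathrm{Ph}(\mathbb{F})$: $\varphi:X\to C$ with $\varphi^\star\delta\in\mathbb{F}(X,A)$ for all $\delta\in\mathbb{E}(C,A)$.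 $\mathbb{F}\text{-}\mathrm{inj}$: $i:A\to Y$ with $i_\star\delta=0$ for all $\delta\in\mathbb{F}(C,A)$; an object $B$ is $\mathbb{F}$-injective if $\mathrm{id}_B\in\mathbb{F}\text{-}\mathrm{inj}$. $\mathbb{F}$ has enough injective objects: every $A$ admits an $\mathbb{F}$-triangle $A\xrightarrow{e}B\to C\overset{\delta}{\dashrightarrow}$ with $B$ $\mathbb{F}$-injective; enough special injective objects: moreover there is an $\mathbb{E}$-triangle $A\to B'\to C'\overset{\delta'}{\dashrightarrow}$ and a morphism $(\mathrm{id}_A,b,\varphi)$ from the former to it with $\varphi\in\mathrm{Ph}(\mathbb{F})$. $\mathcal{I}^\star(X,A)=\{i^\star\delta\mid i\in\mathcal{I}(X,C),\delta\in\mathbb{E}(C,A)\}$. $\mathcal{I}^{\perp_{\mathbb{E}}}=\{g:A\to Y\mid m^\star g_\star\delta=0\ \forall m\in\mathcal{I},\,m:X\to C,\ \forall\delta\in\mathbb{E}(C,A)\}$. For a class $\mathcal{K}$ of morphisms, $\mathrm{Ob}(\mathcal{K})=\{A\mid\mathrm{id}_A\in\mathcal{K}\}$, $\langle\mathcal{K}\rangle$ the smallest ideal containing $\mathcal{K}$; $\mathcal{K}$ is an object ideal if $\mathcal{K}=\langle\mathrm{Ob}(\mathcal{K})\rangle$; $A\in\mathcal{K}$ means $A\in\mathrm{Ob}(\mathcal{K})$. Special $\mathcal{I}$-precover of $C$: $i:X\to C$ in $\mathcal{I}$ with $\mathbb{E}$-triangles $A\to B\to C\overset{\delta}{\dashrightarrow}$,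 $A'\to X\xrightarrow{i}C\overset{\delta'}{\dashrightarrow}$ and a morphism $(j,b,\mathrm{id}_C)$ between them, $j\in\mathcal{I}^{\perp_{\mathbb{E}}}$. Object-special $\mathcal{I}$-precover of $C$: $i:X\to C$ in $\mathcal{I}$ with an $\mathbb{E}$-triangle $A\to X\xrightarrow{i}C\overset{\delta}{\dashrightarrow}$, $A\in\mathcal{I}^{\perp_{\mathbb{E}}}$. (Object-)special precovering ideal: every object has such a precover. *)

theory Defs
  imports Main
begin

text \<open>
Objects have type 'o, morphisms 'm, extensions 'e.  Everything is
relativised to the object set Obj and to hom-sets Hom X Y; operations
take the relevant objects as explicit arguments.

Conventions:
  cmp X Y Z g f       = g o f   for f : X -> Y, g : Y -> Z
  EE C A              = the group E(C,A)
  push C A A' a d     = a_* d        for a : A -> A', d in E(C,A)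
  pull C' C A c d     = c^* d        for c : C' -> C, d in E(C,A)
  rlz C A d B x y     = the sequence A -x-> B -y-> C belongs to s(d)
\<close>

record ('o, 'm, 'e) extri =
  Obj   :: "'o set"
  Hom   :: "'o \<Rightarrow> 'o \<Rightarrow> 'm set"
  cmp   :: "'o \<Rightarrow> 'o \<Rightarrow> 'o \<Rightarrow> 'm \<Rightarrow> 'm \<Rightarrow> 'm"
  idm   :: "'o \<Rightarrow> 'm"
  madd  :: "'o \<Rightarrow> 'o \<Rightarrow> 'm \<Rightarrow> 'm \<Rightarrow> 'm"
  mzero :: "'o \<Rightarrow> 'o \<Rightarrow> 'm"
  EE    :: "'o \<Rightarrow> 'o \<Rightarrow> 'e set"
  eadd  :: "'o \<Rightarrow> 'o \<Rightarrow> 'e \<Rightarrow> 'e \<Rightarrow> 'e"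
  ezero :: "'o \<Rightarrow> 'o \<Rightarrow> 'e"
  push  :: "'o \<Rightarrow> 'o \<Rightarrow> 'o \<Rightarrow> 'm \<Rightarrow> 'e \<Rightarrow> 'e"
  pull  :: "'o \<Rightarrow> 'o \<Rightarrow> 'o \<Rightarrow> 'm \<Rightarrow> 'e \<Rightarrow> 'e"
  rlz   :: "'o \<Rightarrow> 'o \<Rightarrow> 'e \<Rightarrow> 'o \<Rightarrow> 'm \<Rightarrow> 'm \<Rightarrow> bool"

definition abgrp :: "'a set \<Rightarrow> ('a \<Rightarrow> 'a \<Rightarrow> 'a) \<Rightarrow> 'a \<Rightarrow> bool" where
  "abgrp S p z \<longleftrightarrow> z \<in> S \<and> (\<forall>a\<in>S. \<forall>b\<in>S. p a b \<in> S)
     \<and> (\<forall>a\<in>S. \<forall>b\<in>S. \<forall>c\<in>S. p (p a b) c = p a (p b c))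
     \<and> (\<forall>a\<in>S. \<forall>b\<in>S. p a b = p b a)
     \<and> (\<forall>a\<in>S. p z a = a)
     \<and> (\<forall>a\<in>S. \<exists>b\<in>S. p a b = z)"

definition is_category :: "('o,'m,'e,'x) extri_scheme \<Rightarrow> bool" where
  "is_category X \<longleftrightarrow>
     (\<forall>A\<in>Obj X. idm X A \<in> Hom X A A)
   \<and> (\<forall>A\<in>Obj X. \<forall>B\<in>Obj X. \<forall>C\<in>Obj X. \<forall>f\<in>Hom X A B. \<forall>g\<in>Hom X B C.
        cmp X A B C g f \<in> Hom X A C)
   \<and> (\<forall>A\<in>Obj X. \<forall>B\<in>Obj X. \<forall>C\<in>Obj X. \<forall>D\<in>Obj X.
        \<forall>f\<in>Hom X A B. \<forall>g\<in>Hom X B C. \<forall>h\<in>Hom X C D.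
        cmp X A C D h (cmp X A B C g f) = cmp X A B D (cmp X B C D h g) f)
   \<and> (\<forall>A\<in>Obj X. \<forall>B\<in>Obj X. \<forall>f\<in>Hom X A B.
        cmp X A B B (idm X B) f = f \<and> cmp X A A B f (idm X A) = f)"

definition is_biprod :: "('o,'m,'e,'x) extri_scheme \<Rightarrow> 'o \<Rightarrow> 'o \<Rightarrow> 'o \<Rightarrow> 'm \<Rightarrow> 'm \<Rightarrow> 'm \<Rightarrow> 'm \<Rightarrow> bool" where
  "is_biprod X A B P i1 i2 p1 p2 \<longleftrightarrow>
     P \<in> Obj X \<and> i1 \<in> Hom X A P \<and> i2 \<in> Hom X B P \<and> p1 \<in> Hom X P A \<and> p2 \<in> Hom X P B
   \<and> cmp X A P A p1 i1 = idm X A \<and> cmp X B P B p2 i2 = idm X B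
   \<and> cmp X A P B p2 i1 = mzero X A B \<and> cmp X B P A p1 i2 = mzero X B A
   \<and> madd X P P (cmp X P A P i1 p1) (cmp X P B P i2 p2) = idm X P"

definition is_additive :: "('o,'m,'e,'x) extri_scheme \<Rightarrow> bool" where
  "is_additive X \<longleftrightarrow> is_category X
   \<and> (\<forall>A\<in>Obj X. \<forall>B\<in>Obj X. abgrp (Hom X A B) (madd X A B) (mzero X A B))
   \<and> (\<forall>A\<in>Obj X. \<forall>B\<in>Obj X. \<forall>C\<in>Obj X. \<forall>f\<in>Hom X A B. \<forall>f'\<in>Hom X A B. \<forall>g\<in>Hom X B C.
        cmp X A B C g (madd X A B f f') = madd X A C (cmp X A B C g f) (cmp X A B C g f'))
   \<and> (\<forall>A\<in>Obj X. \<forall>B\<in>Obj X. \<forall>C\<in>Obj X. \<forall>f\<in>Hom X A B. \<forall>g\<in>Hom X B C. \<forall>g'\<in>Hom X B C.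
        cmp X A B C (madd X B C g g') f = madd X A C (cmp X A B C g f) (cmp X A B C g' f))
   \<and> (\<exists>Z\<in>Obj X. \<forall>A\<in>Obj X. Hom X A Z = {mzero X A Z} \<and> Hom X Z A = {mzero X Z A})
   \<and> (\<forall>A\<in>Obj X. \<forall>B\<in>Obj X. \<exists>P i1 i2 p1 p2. is_biprod X A B P i1 i2 p1 p2)"

definition iso :: "('o,'m,'e,'x) extri_scheme \<Rightarrow> 'o \<Rightarrow> 'o \<Rightarrow> 'm \<Rightarrow> bool" where
  "iso X A B f \<longleftrightarrow> f \<in> Hom X A B \<and>
     (\<exists>g\<in>Hom X B A. cmp X A B A g f = idm X A \<and> cmp X B A B f g = idm X B)"

section \<open>(ET1): E is a biadditive functor\<close>

definition ET1 :: "('o,'m,'e,'x) extri_scheme \<Rightarrow> bool" where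
  "ET1 X \<longleftrightarrow>
     (\<forall>C\<in>Obj X. \<forall>A\<in>Obj X. abgrp (EE X C A) (eadd X C A) (ezero X C A))
   \<and> (\<forall>C\<in>Obj X. \<forall>A\<in>Obj X. \<forall>A'\<in>Obj X. \<forall>a\<in>Hom X A A'. \<forall>d\<in>EE X C A.
        push X C A A' a d \<in> EE X C A')
   \<and> (\<forall>C'\<in>Obj X. \<forall>C\<in>Obj X. \<forall>A\<in>Obj X. \<forall>c\<in>Hom X C' C. \<forall>d\<in>EE X C A.
        pull X C' C A c d \<in> EE X C' A)
   \<and> (\<forall>C\<in>Obj X. \<forall>A\<in>Obj X. \<forall>A'\<in>Obj X. \<forall>a\<in>Hom X A A'. \<forall>d\<in>EE X C A. \<forall>d'\<in>EE X C A.
        push X C A A' a (eadd X C A d d') = eadd X C A' (push X C A A' a d) (push X C A A' a d'))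
   \<and> (\<forall>C\<in>Obj X. \<forall>A\<in>Obj X. \<forall>A'\<in>Obj X. \<forall>a\<in>Hom X A A'. \<forall>b\<in>Hom X A A'. \<forall>d\<in>EE X C A.
        push X C A A' (madd X A A' a b) d = eadd X C A' (push X C A A' a d) (push X C A A' b d))
   \<and> (\<forall>C'\<in>Obj X. \<forall>C\<in>Obj X. \<forall>A\<in>Obj X. \<forall>c\<in>Hom X C' C. \<forall>d\<in>EE X C A. \<forall>d'\<in>EE X C A.
        pull X C' C A c (eadd X C A d d') = eadd X C' A (pull X C' C A c d) (pull X C' C A c d'))
   \<and> (\<forall>C'\<in>Obj X. \<forall>C\<in>Obj X. \<forall>A\<in>Obj X. \<forall>c\<in>Hom X C' C. \<forall>e\<in>Hom X C' C. \<forall>d\<in>EE X C A.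
        pull X C' C A (madd X C' C c e) d = eadd X C' A (pull X C' C A c d) (pull X C' C A e d))
   \<and> (\<forall>C\<in>Obj X. \<forall>A\<in>Obj X. \<forall>d\<in>EE X C A.
        push X C A A (idm X A) d = d \<and> pull X C C A (idm X C) d = d)
   \<and> (\<forall>C\<in>Obj X. \<forall>A\<in>Obj X. \<forall>A'\<in>Obj X. \<forall>A''\<in>Obj X. \<forall>a\<in>Hom X A A'. \<forall>a'\<in>Hom X A' A''.
        \<forall>d\<in>EE X C A. push X C A A'' (cmp X A A' A'' a' a) d = push X C A' A'' a' (push X C A A' a d))
   \<and> (\<forall>C''\<in>Obj X. \<forall>C'\<in>Obj X. \<forall>C\<in>Obj X. \<forall>A\<in>Obj X. \<forall>c'\<in>Hom X C'' C'. \<forall>c\<in>Hom X C' C.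
        \<forall>d\<in>EE X C A. pull X C'' C A (cmp X C'' C' C c c') d = pull X C'' C' A c' (pull X C' C A c d))
   \<and> (\<forall>C'\<in>Obj X. \<forall>C\<in>Obj X. \<forall>A\<in>Obj X. \<forall>A'\<in>Obj X. \<forall>c\<in>Hom X C' C. \<forall>a\<in>Hom X A A'.
        \<forall>d\<in>EE X C A. push X C' A A' a (pull X C' C A c d) = pull X C' C A' c (push X C A A' a d))"

section \<open>(ET2): s is an additive realization\<close>

definition seq_equiv :: "('o,'m,'e,'x) extri_scheme \<Rightarrow> 'o \<Rightarrow> 'o \<Rightarrow> 'o \<Rightarrow> 'm \<Rightarrow> 'm \<Rightarrow> 'o \<Rightarrow> 'm \<Rightarrow> 'm \<Rightarrow> bool" where
  "seq_equiv X A C B x y B' x' y' \<longleftrightarrow>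
     (\<exists>b. iso X B B' b \<and> cmp X A B B' b x = x' \<and> cmp X B B' C y' b = y)"

text \<open>Morphism (a,b,c) of E-triangles from A -x-> B -y-> C (d) to A' -x'-> B' -y'-> C' (d').\<close>
definition etri_mor :: "('o,'m,'e,'x) extri_scheme \<Rightarrow>
     'o \<Rightarrow> 'o \<Rightarrow> 'e \<Rightarrow> 'o \<Rightarrow> 'm \<Rightarrow> 'm \<Rightarrow> 'o \<Rightarrow> 'o \<Rightarrow> 'e \<Rightarrow> 'o \<Rightarrow> 'm \<Rightarrow> 'm \<Rightarrow>
     'm \<Rightarrow> 'm \<Rightarrow> 'm \<Rightarrow> bool" where
  "etri_mor X C A d B x y C' A' d' B' x' y' a b c \<longleftrightarrow>
     a \<in> Hom X A A' \<and> b \<in> Hom X B B' \<and> c \<in> Hom X C C'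
   \<and> cmp X A B B' b x = cmp X A A' B' x' a
   \<and> cmp X B C C' c y = cmp X B B' C' y' b
   \<and> push X C A A' a d = pull X C C' A' c d'"

definition ET2 :: "('o,'m,'e,'x) extri_scheme \<Rightarrow> bool" where
  "ET2 X \<longleftrightarrow>
     \<comment> \<open>s(d) consists of sequences A -> B -> C for d in E(C,A)\<close>
     (\<forall>C A d B x y. rlz X C A d B x y \<longrightarrow>
        A \<in> Obj X \<and> C \<in> Obj X \<and> d \<in> EE X C A \<and> B \<in> Obj X \<and> x \<in> Hom X A B \<and> y \<in> Hom X B C)
     \<comment> \<open>s(d) is one equivalence class of sequences\<close>
   \<and> (\<forall>C\<in>Obj X. \<forall>A\<in>Obj X. \<forall>d\<in>EE X C A. \<exists>B x y. rlz X C A d B x y)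
   \<and> (\<forall>C A d B x y B' x' y'. rlz X C A d B x y \<and> rlz X C A d B' x' y' \<longrightarrow>
        seq_equiv X A C B x y B' x' y')
   \<and> (\<forall>C A d B x y B' x' y'. rlz X C A d B x y \<and> B' \<in> Obj X \<and> x' \<in> Hom X A B' \<and> y' \<in> Hom X B' C
        \<and> seq_equiv X A C B x y B' x' y' \<longrightarrow> rlz X C A d B' x' y')
     \<comment> \<open>realization condition\<close>
   \<and> (\<forall>C A d B x y C' A' d' B' x' y' a c.
        rlz X C A d B x y \<and> rlz X C' A' d' B' x' y' \<and> a \<in> Hom X A A' \<and> c \<in> Hom X C C'
        \<and> push X C A A' a d = pull X C C' A' c d' \<longrightarrow>
        (\<exists>b. etri_mor X C A d B x y C' A' d' B' x' y' a b c))
     \<comment> \<open>additivity: s(0) is the split sequence\<close>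
   \<and> (\<forall>A\<in>Obj X. \<forall>C\<in>Obj X. \<forall>P i1 i2 p1 p2. is_biprod X A C P i1 i2 p1 p2 \<longrightarrow>
        rlz X C A (ezero X C A) P i1 p2)
     \<comment> \<open>additivity: s(d (+) d') = s(d) (+) s(d')\<close>
   \<and> (\<forall>C A d B x y C' A' d' B' x' y'
        PA iA iA' pA pA' PB iB iB' pB pB' PC iC iC' pC pC'.
        rlz X C A d B x y \<and> rlz X C' A' d' B' x' y'
        \<and> is_biprod X A A' PA iA iA' pA pA'
        \<and> is_biprod X B B' PB iB iB' pB pB'
        \<and> is_biprod X C C' PC iC iC' pC pC' \<longrightarrow>
        rlz X PC PA
          (eadd X PC PA (push X PC A PA iA (pull X PC C A pC d))
                        (push X PC A' PA iA' (pull X PC C' A' pC' d')))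
          PB
          (madd X PA PB (cmp X PA B PB iB (cmp X PA A B x pA))
                        (cmp X PA B' PB iB' (cmp X PA A' B' x' pA')))
          (madd X PB PC (cmp X PB C PC iC (cmp X PB B C y pB))
                        (cmp X PB C' PC iC' (cmp X PB B' C' y' pB'))))"

definition ET3 :: "('o,'m,'e,'x) extri_scheme \<Rightarrow> bool" where
  "ET3 X \<longleftrightarrow>
     (\<forall>C A d B x y C' A' d' B' x' y' a b.
        rlz X C A d B x y \<and> rlz X C' A' d' B' x' y' \<and> a \<in> Hom X A A' \<and> b \<in> Hom X B B'
        \<and> cmp X A B B' b x = cmp X A A' B' x' a \<longrightarrow>
        (\<exists>c. etri_mor X C A d B x y C' A' d' B' x' y' a b c))"

definition ET3op :: "('o,'m,'e,'x) extri_scheme \<Rightarrow> bool" where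
  "ET3op X \<longleftrightarrow>
     (\<forall>C A d B x y C' A' d' B' x' y' b c.
        rlz X C A d B x y \<and> rlz X C' A' d' B' x' y' \<and> b \<in> Hom X B B' \<and> c \<in> Hom X C C'
        \<and> cmp X B C C' c y = cmp X B B' C' y' b \<longrightarrow>
        (\<exists>a. etri_mor X C A d B x y C' A' d' B' x' y' a b c))"

definition ET4 :: "('o,'m,'e,'x) extri_scheme \<Rightarrow> bool" where
  "ET4 X \<longleftrightarrow>
     (\<forall>A B D C F f f' g g' d d'.
        rlz X D A d B f f' \<and> rlz X F B d' C g g' \<longrightarrow>
        (\<exists>E h h' dd e d''. E \<in> Obj X \<and> dd \<in> Hom X D E \<and> e \<in> Hom X E F
           \<and> h = cmp X A B C g f
           \<and> rlz X E A d'' C h h'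
           \<and> cmp X B D E dd f' = cmp X B C E h' g
           \<and> cmp X C E F e h' = g'
           \<and> rlz X F D (push X F B D f' d') E dd e
           \<and> pull X D E A dd d'' = d
           \<and> push X E A B f d'' = pull X E F B e d'))"

definition ET4op :: "('o,'m,'e,'x) extri_scheme \<Rightarrow> bool" where
  "ET4op X \<longleftrightarrow>
     (\<forall>D A B F C f' f g' g d d'.
        rlz X B D d A f' f \<and> rlz X C F d' B g' g \<longrightarrow>
        (\<exists>E h h' dd e d''. E \<in> Obj X \<and> dd \<in> Hom X D E \<and> e \<in> Hom X E F
           \<and> h = cmp X A B C g f
           \<and> rlz X C E d'' A h' h
           \<and> cmp X D E A h' dd = f'
           \<and> cmp X E A B f h' = cmp X E F B g' e
           \<and> rlz X F D (pull X F B D g' d) E dd e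
           \<and> d' = push X C E F e d''
           \<and> push X B D E dd d = pull X B C E g d''))"

definition extriangulated :: "('o,'m,'e,'x) extri_scheme \<Rightarrow> bool" where
  "extriangulated X \<longleftrightarrow> is_additive X \<and> ET1 X \<and> ET2 X \<and> ET3 X \<and> ET3op X \<and> ET4 X \<and> ET4op X"

definition ideal :: "('o,'m,'e,'x) extri_scheme \<Rightarrow> ('o \<Rightarrow> 'o \<Rightarrow> 'm set) \<Rightarrow> bool" where
  "ideal X I \<longleftrightarrow>
     (\<forall>A\<in>Obj X. \<forall>B\<in>Obj X. I A B \<subseteq> Hom X A B \<and> mzero X A B \<in> I A B
        \<and> (\<forall>f\<in>I A B. \<forall>g\<in>I A B. madd X A B f g \<in> I A B))
   \<and> (\<forall>W\<in>Obj X. \<forall>A\<in>Obj X. \<forall>B\<in>Obj X. \<forall>Z\<in>Obj X. \<forall>f\<in>I A B. \<forall>u\<in>Hom X W A. \<forall>v\<in>Hom X B Z.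
        cmp X W B Z v (cmp X W A B f u) \<in> I W Z)"

definition add_subfunctor :: "('o,'m,'e,'x) extri_scheme \<Rightarrow> ('o \<Rightarrow> 'o \<Rightarrow> 'e set) \<Rightarrow> bool" where
  "add_subfunctor X F \<longleftrightarrow>
     (\<forall>C\<in>Obj X. \<forall>A\<in>Obj X. F C A \<subseteq> EE X C A \<and> ezero X C A \<in> F C A
        \<and> (\<forall>d\<in>F C A. \<forall>d'\<in>F C A. eadd X C A d d' \<in> F C A)
        \<and> (\<forall>d\<in>F C A. \<exists>d'\<in>F C A. eadd X C A d d' = ezero X C A))
   \<and> (\<forall>C\<in>Obj X. \<forall>A\<in>Obj X. \<forall>A'\<in>Obj X. \<forall>a\<in>Hom X A A'. \<forall>d\<in>F C A. push X C A A' a d \<in> F C A')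
   \<and> (\<forall>C'\<in>Obj X. \<forall>C\<in>Obj X. \<forall>A\<in>Obj X. \<forall>c\<in>Hom X C' C. \<forall>d\<in>F C A. pull X C' C A c d \<in> F C' A)"

definition Ph :: "('o,'m,'e,'x) extri_scheme \<Rightarrow> ('o \<Rightarrow> 'o \<Rightarrow> 'e set) \<Rightarrow> 'o \<Rightarrow> 'o \<Rightarrow> 'm set" where
  "Ph X F W C = {\<phi> \<in> Hom X W C. \<forall>A\<in>Obj X. \<forall>d\<in>EE X C A. pull X W C A \<phi> d \<in> F W A}"

definition Finj :: "('o,'m,'e,'x) extri_scheme \<Rightarrow> ('o \<Rightarrow> 'o \<Rightarrow> 'e set) \<Rightarrow> 'o \<Rightarrow> 'o \<Rightarrow> 'm set" where
  "Finj X F A Y = {i \<in> Hom X A Y. \<forall>C\<in>Obj X. \<forall>d\<in>F C A. push X C A Y i d = ezero X C Y}"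

definition F_injective :: "('o,'m,'e,'x) extri_scheme \<Rightarrow> ('o \<Rightarrow> 'o \<Rightarrow> 'e set) \<Rightarrow> 'o \<Rightarrow> bool" where
  "F_injective X F B \<longleftrightarrow> B \<in> Obj X \<and> idm X B \<in> Finj X F B B"

definition F_enough_inj :: "('o,'m,'e,'x) extri_scheme \<Rightarrow> ('o \<Rightarrow> 'o \<Rightarrow> 'e set) \<Rightarrow> bool" where
  "F_enough_inj X F \<longleftrightarrow>
     (\<forall>A\<in>Obj X. \<exists>B e C y d. rlz X C A d B e y \<and> d \<in> F C A \<and> F_injective X F B)"

definition F_enough_special_inj :: "('o,'m,'e,'x) extri_scheme \<Rightarrow> ('o \<Rightarrow> 'o \<Rightarrow> 'e set) \<Rightarrow> bool" where
  "F_enough_special_inj X F \<longleftrightarrow>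
     (\<forall>A\<in>Obj X. \<exists>B e C y d B' x' C' y' d' b \<phi>.
        rlz X C A d B e y \<and> d \<in> F C A \<and> F_injective X F B
        \<and> rlz X C' A d' B' x' y'
        \<and> etri_mor X C A d B e y C' A d' B' x' y' (idm X A) b \<phi>
        \<and> \<phi> \<in> Ph X F C C')"

definition Istar :: "('o,'m,'e,'x) extri_scheme \<Rightarrow> ('o \<Rightarrow> 'o \<Rightarrow> 'm set) \<Rightarrow> 'o \<Rightarrow> 'o \<Rightarrow> 'e set" where
  "Istar X I W A = {pull X W C A i d | C i d. C \<in> Obj X \<and> i \<in> I W C \<and> d \<in> EE X C A}"

definition Iperp :: "('o,'m,'e,'x) extri_scheme \<Rightarrow> ('o \<Rightarrow> 'o \<Rightarrow> 'm set) \<Rightarrow> 'o \<Rightarrow> 'o \<Rightarrow> 'm set" where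
  "Iperp X I A Y = {g \<in> Hom X A Y. \<forall>W\<in>Obj X. \<forall>C\<in>Obj X. \<forall>m\<in>I W C. \<forall>d\<in>EE X C A.
       pull X W C Y m (push X C A Y g d) = ezero X W Y}"

definition ObK :: "('o,'m,'e,'x) extri_scheme \<Rightarrow> ('o \<Rightarrow> 'o \<Rightarrow> 'm set) \<Rightarrow> 'o set" where
  "ObK X K = {A \<in> Obj X. idm X A \<in> K A A}"

definition gen_ideal :: "('o,'m,'e,'x) extri_scheme \<Rightarrow> ('o \<Rightarrow> 'o \<Rightarrow> 'm set) \<Rightarrow> 'o \<Rightarrow> 'o \<Rightarrow> 'm set" where
  "gen_ideal X K A B = {f. \<forall>J. ideal X J \<and> (\<forall>P\<in>Obj X. \<forall>Q\<in>Obj X. K P Q \<subseteq> J P Q) \<longrightarrow> f \<in> J A B}"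

definition object_ideal :: "('o,'m,'e,'x) extri_scheme \<Rightarrow> ('o \<Rightarrow> 'o \<Rightarrow> 'm set) \<Rightarrow> bool" where
  "object_ideal X K \<longleftrightarrow>
     (\<forall>A\<in>Obj X. \<forall>B\<in>Obj X.
        K A B = gen_ideal X (\<lambda>P Q. if P = Q \<and> P \<in> ObK X K then {idm X P} else {}) A B)"

definition special_precover :: "('o,'m,'e,'x) extri_scheme \<Rightarrow> ('o \<Rightarrow> 'o \<Rightarrow> 'm set) \<Rightarrow> 'o \<Rightarrow> 'o \<Rightarrow> 'm \<Rightarrow> bool" where
  "special_precover X I C W i \<longleftrightarrow> i \<in> I W C \<and>
     (\<exists>A B x y d A' x' d' j b.
        rlz X C A d B x y \<and> rlz X C A' d' W x' i
        \<and> etri_mor X C A d B x y C A' d' W x' i j b (idm X C)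
        \<and> j \<in> Iperp X I A A')"

definition obj_special_precover :: "('o,'m,'e,'x) extri_scheme \<Rightarrow> ('o \<Rightarrow> 'o \<Rightarrow> 'm set) \<Rightarrow> 'o \<Rightarrow> 'o \<Rightarrow> 'm \<Rightarrow> bool" where
  "obj_special_precover X I C W i \<longleftrightarrow> i \<in> I W C \<and>
     (\<exists>A x d. rlz X C A d W x i \<and> A \<in> ObK X (Iperp X I))"

definition special_precovering :: "('o,'m,'e,'x) extri_scheme \<Rightarrow> ('o \<Rightarrow> 'o \<Rightarrow> 'm set) \<Rightarrow> bool" where
  "special_precovering X I \<longleftrightarrow> (\<forall>C\<in>Obj X. \<exists>W i. special_precover X I C W i)"

definition obj_special_precovering :: "('o,'m,'e,'x) extri_scheme \<Rightarrow> ('o \<Rightarrow> 'o \<Rightarrow> 'm set) \<Rightarrow> bool" where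
  "obj_special_precovering X I \<longleftrightarrow> (\<forall>C\<in>Obj X. \<exists>W i. obj_special_precover X I C W i)"

definition enough_inj_objects :: "('o,'m,'e,'x) extri_scheme \<Rightarrow> bool" where
  "enough_inj_objects X \<longleftrightarrow>
     (\<forall>A\<in>Obj X. \<exists>E x C y d. rlz X C A d E x y \<and> (\<forall>Z\<in>Obj X. EE X Z E = {ezero X Z E}))"

definition enough_proj_morphisms :: "('o,'m,'e,'x) extri_scheme \<Rightarrow> bool" where
  "enough_proj_morphisms X \<longleftrightarrow>
     (\<forall>C\<in>Obj X. \<exists>K P x p g. rlz X C K g P x p
        \<and> (\<forall>A\<in>Obj X. \<forall>d\<in>EE X C A. pull X P C A p d = ezero X P A))"

definition cond_a :: "('o,'m,'e,'x) extri_scheme \<Rightarrow> ('o \<Rightarrow> 'o \<Rightarrow> 'm set) \<Rightarrow> bool" where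
  "cond_a X I \<longleftrightarrow> (\<exists>F. add_subfunctor X F \<and> F_enough_inj X F
      \<and> (\<forall>A\<in>Obj X. \<forall>B\<in>Obj X. I A B = Ph X F A B))"

definition cond_a' :: "('o,'m,'e,'x) extri_scheme \<Rightarrow> ('o \<Rightarrow> 'o \<Rightarrow> 'm set) \<Rightarrow> bool" where
  "cond_a' X I \<longleftrightarrow> (\<exists>F. add_subfunctor X F \<and> F_enough_special_inj X F
      \<and> (\<forall>A\<in>Obj X. \<forall>B\<in>Obj X. I A B = Ph X F A B))"

definition cond_b :: "('o,'m,'e,'x) extri_scheme \<Rightarrow> ('o \<Rightarrow> 'o \<Rightarrow> 'm set) \<Rightarrow> bool" where
  "cond_b X I \<longleftrightarrow> obj_special_precovering X I"

definition cond_c :: "('o,'m,'e,'x) extri_scheme \<Rightarrow> ('o \<Rightarrow> 'o \<Rightarrow> 'm set) \<Rightarrow> bool" where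
  "cond_c X I \<longleftrightarrow> F_enough_special_inj X (Istar X I)
      \<and> (\<forall>A\<in>Obj X. \<forall>B\<in>Obj X. I A B = Ph X (Istar X I) A B)"

definition cond_d :: "('o,'m,'e,'x) extri_scheme \<Rightarrow> ('o \<Rightarrow> 'o \<Rightarrow> 'm set) \<Rightarrow> bool" where
  "cond_d X I \<longleftrightarrow> special_precovering X I \<and> object_ideal X (Iperp X I)"

end

theory Submission
  imports Defs
begin

lemma abgrp_closed: "abgrp S p z \<Longrightarrow> a \<in> S \<Longrightarrow> b \<in> S \<Longrightarrow> p a b \<in> S"
  unfolding abgrp_def by blast
lemma abgrp_zero: "abgrp S p z \<Longrightarrow> z \<in> S"
  unfolding abgrp_def by blast
lemma abgrp_assoc: "abgrp S p z \<Longrightarrow> a \<in> S \<Longrightarrow> b \<in> S \<Longrightarrow> c \<in> S \<Longrightarrow> p (p a b) c = p a (p b c)"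
  unfolding abgrp_def by (elim conjE) (drule bspec, assumption)+
lemma abgrp_comm: "abgrp S p z \<Longrightarrow> a \<in> S \<Longrightarrow> b \<in> S \<Longrightarrow> p a b = p b a"
  unfolding abgrp_def by (elim conjE) (drule bspec, assumption)+
lemma abgrp_zl: "abgrp S p z \<Longrightarrow> a \<in> S \<Longrightarrow> p z a = a"
  unfolding abgrp_def by (elim conjE) (drule bspec, assumption)+
lemma abgrp_inv: "abgrp S p z \<Longrightarrow> a \<in> S \<Longrightarrow> \<exists>b\<in>S. p a b = z"
  unfolding abgrp_def by (elim conjE) (drule bspec, assumption)+
lemma abgrp_zr: "abgrp S p z \<Longrightarrow> a \<in> S \<Longrightarrow> p a z = a"
  using abgrp_comm[of S p z a z] abgrp_zl[of S p z a] abgrp_zero[of S p z] by simp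

lemma abgrp_cancel:
  assumes G: "abgrp S p z" and S: "a \<in> S" "b \<in> S" "c \<in> S" and e: "p a b = p a c"
  shows "b = c"
proof -
  obtain a' where a': "a' \<in> S" "p a a' = z" using abgrp_inv[OF G S(1)] by blast
  have 1: "p a' a = z" using abgrp_comm[OF G a'(1) S(1)] a'(2) by simp
  have "p a' (p a b) = p (p a' a) b" using abgrp_assoc[OF G a'(1) S(1) S(2)] by (rule sym)
  also have "\<dots> = b" using 1 abgrp_zl[OF G S(2)] by (simp only:)
  finally have hb: "p a' (p a b) = b" .
  have "p a' (p a c) = p (p a' a) c" using abgrp_assoc[OF G a'(1) S(1) S(3)] by (rule sym)
  also have "\<dots> = c" using 1 abgrp_zl[OF G S(3)] by (simp only:)
  finally have hc: "p a' (p a c) = c" .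
  show ?thesis using trans[OF hb[symmetric] trans[OF arg_cong[where f="p a'", OF e] hc]] .
qed

lemma abgrp_idem: assumes G: "abgrp S p z" and "a \<in> S" "p a a = a" shows "a = z"
proof -
  have "p a a = p a z" using assms abgrp_zr[OF G] by simp
  thus ?thesis using abgrp_cancel[OF G] assms abgrp_zero[OF G] by blast
qed

lemma abgrp_inv_uniq: assumes G: "abgrp S p z" and "a \<in> S" "b \<in> S" "m \<in> S" "p a m = z" "p b m = z" shows "a = b"
proof -
  have "p m a = p m b" using assms abgrp_comm[OF G, of m a] abgrp_comm[OF G, of m b] by simp
  thus ?thesis using abgrp_cancel[OF G] assms by blast
qed


locale xt =
  fixes X :: "('o,'m,'e) extri"
  assumes EX: "extriangulated X"
begin

lemma addv: "is_additive X" using EX unfolding extriangulated_def by simp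
lemma cat: "is_category X" using addv unfolding is_additive_def by simp
lemma et1: "ET1 X" using EX unfolding extriangulated_def by simp
lemma et2: "ET2 X" using EX unfolding extriangulated_def by simp
lemma et3: "ET3 X" using EX unfolding extriangulated_def by simp
lemma et3op: "ET3op X" using EX unfolding extriangulated_def by simp
lemma et4: "ET4 X" using EX unfolding extriangulated_def by simp
lemma et4op: "ET4op X" using EX unfolding extriangulated_def by simp

lemma id_hom[simp]: "A \<in> Obj X \<Longrightarrow> idm X A \<in> Hom X A A"
  using cat unfolding is_category_def by (elim conjE) simp
lemma cmp_hom[simp]: "A\<in>Obj X \<Longrightarrow> B\<in>Obj X \<Longrightarrow> C\<in>Obj X \<Longrightarrow> f\<in>Hom X A B \<Longrightarrow> g\<in>Hom X B C
   \<Longrightarrow> cmp X A B C g f \<in> Hom X A C"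
  using cat unfolding is_category_def by (elim conjE) simp
lemma assoc: "A\<in>Obj X \<Longrightarrow> B\<in>Obj X \<Longrightarrow> C\<in>Obj X \<Longrightarrow> D\<in>Obj X \<Longrightarrow> f\<in>Hom X A B \<Longrightarrow> g\<in>Hom X B C
   \<Longrightarrow> h\<in>Hom X C D \<Longrightarrow> cmp X A C D h (cmp X A B C g f) = cmp X A B D (cmp X B C D h g) f"
  using cat unfolding is_category_def by (elim conjE) simp
lemma id_l[simp]: "A\<in>Obj X \<Longrightarrow> B\<in>Obj X \<Longrightarrow> f\<in>Hom X A B \<Longrightarrow> cmp X A B B (idm X B) f = f"
  using cat unfolding is_category_def by (elim conjE) simp
lemma id_r[simp]: "A\<in>Obj X \<Longrightarrow> B\<in>Obj X \<Longrightarrow> f\<in>Hom X A B \<Longrightarrow> cmp X A A B f (idm X A) = f"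
  using cat unfolding is_category_def by (elim conjE) simp

lemma hgrp: "A\<in>Obj X \<Longrightarrow> B\<in>Obj X \<Longrightarrow> abgrp (Hom X A B) (madd X A B) (mzero X A B)"
  using addv unfolding is_additive_def by (elim conjE) simp
lemma zero_hom[simp]: "A\<in>Obj X \<Longrightarrow> B\<in>Obj X \<Longrightarrow> mzero X A B \<in> Hom X A B"
  by (rule abgrp_zero[OF hgrp])
lemma madd_hom[simp]: "A\<in>Obj X \<Longrightarrow> B\<in>Obj X \<Longrightarrow> f\<in>Hom X A B \<Longrightarrow> g\<in>Hom X A B \<Longrightarrow> madd X A B f g \<in> Hom X A B"
  by (rule abgrp_closed[OF hgrp])
lemma madd_zl[simp]: "A\<in>Obj X \<Longrightarrow> B\<in>Obj X \<Longrightarrow> f\<in>Hom X A B \<Longrightarrow> madd X A B (mzero X A B) f = f"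
  by (rule abgrp_zl[OF hgrp])
lemma madd_zr[simp]: "A\<in>Obj X \<Longrightarrow> B\<in>Obj X \<Longrightarrow> f\<in>Hom X A B \<Longrightarrow> madd X A B f (mzero X A B) = f"
  by (rule abgrp_zr[OF hgrp])
lemma madd_comm: "A\<in>Obj X \<Longrightarrow> B\<in>Obj X \<Longrightarrow> f\<in>Hom X A B \<Longrightarrow> g\<in>Hom X A B \<Longrightarrow> madd X A B f g = madd X A B g f"
  by (rule abgrp_comm[OF hgrp])
lemma madd_assoc: "A\<in>Obj X \<Longrightarrow> B\<in>Obj X \<Longrightarrow> f\<in>Hom X A B \<Longrightarrow> g\<in>Hom X A B \<Longrightarrow> h\<in>Hom X A B \<Longrightarrow>
   madd X A B (madd X A B f g) h = madd X A B f (madd X A B g h)"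
  by (rule abgrp_assoc[OF hgrp])
lemma madd_inv: "A\<in>Obj X \<Longrightarrow> B\<in>Obj X \<Longrightarrow> f\<in>Hom X A B \<Longrightarrow> \<exists>n\<in>Hom X A B. madd X A B f n = mzero X A B"
  by (rule abgrp_inv[OF hgrp])

lemma dist_r: "A\<in>Obj X \<Longrightarrow> B\<in>Obj X \<Longrightarrow> C\<in>Obj X \<Longrightarrow> f\<in>Hom X A B \<Longrightarrow> f'\<in>Hom X A B \<Longrightarrow> g\<in>Hom X B C \<Longrightarrow>
   cmp X A B C g (madd X A B f f') = madd X A C (cmp X A B C g f) (cmp X A B C g f')"
  using addv unfolding is_additive_def by (elim conjE) simp
lemma dist_l: "A\<in>Obj X \<Longrightarrow> B\<in>Obj X \<Longrightarrow> C\<in>Obj X \<Longrightarrow> f\<in>Hom X A B \<Longrightarrow> g\<in>Hom X B C \<Longrightarrow> g'\<in>Hom X B C \<Longrightarrow>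
   cmp X A B C (madd X B C g g') f = madd X A C (cmp X A B C g f) (cmp X A B C g' f)"
  using addv unfolding is_additive_def by (elim conjE) simp

lemma cmp_zr[simp]: assumes "A\<in>Obj X" "B\<in>Obj X" "C\<in>Obj X" "g\<in>Hom X B C"
  shows "cmp X A B C g (mzero X A B) = mzero X A C"
proof -
  have "cmp X A B C g (mzero X A B) = madd X A C (cmp X A B C g (mzero X A B)) (cmp X A B C g (mzero X A B))"
    using dist_r[of A B C "mzero X A B" "mzero X A B" g] assms by simp
  thus ?thesis using abgrp_idem[OF hgrp[of A C]] assms by simp
qed
lemma cmp_zl[simp]: assumes "A\<in>Obj X" "B\<in>Obj X" "C\<in>Obj X" "f\<in>Hom X A B"
  shows "cmp X A B C (mzero X B C) f = mzero X A C"
proof -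
  have "cmp X A B C (mzero X B C) f = madd X A C (cmp X A B C (mzero X B C) f) (cmp X A B C (mzero X B C) f)"
    using dist_l[of A B C f "mzero X B C" "mzero X B C"] assms by simp
  thus ?thesis using abgrp_idem[OF hgrp[of A C]] assms by simp
qed

lemma zobj: "\<exists>Z\<in>Obj X. \<forall>A\<in>Obj X. Hom X A Z = {mzero X A Z} \<and> Hom X Z A = {mzero X Z A}"
  using addv unfolding is_additive_def by (elim conjE) simp
lemma biprod_ex: "A\<in>Obj X \<Longrightarrow> B\<in>Obj X \<Longrightarrow> \<exists>P i1 i2 p1 p2. is_biprod X A B P i1 i2 p1 p2"
  using addv unfolding is_additive_def by (elim conjE) simp

lemma egrp: "C\<in>Obj X \<Longrightarrow> A\<in>Obj X \<Longrightarrow> abgrp (EE X C A) (eadd X C A) (ezero X C A)"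
  using et1[unfolded ET1_def, THEN conjunct1] by blast
lemma ezero_EE[simp]: "C\<in>Obj X \<Longrightarrow> A\<in>Obj X \<Longrightarrow> ezero X C A \<in> EE X C A"
  by (rule abgrp_zero[OF egrp])
lemma eadd_EE[simp]: "C\<in>Obj X \<Longrightarrow> A\<in>Obj X \<Longrightarrow> d\<in>EE X C A \<Longrightarrow> d'\<in>EE X C A \<Longrightarrow> eadd X C A d d' \<in> EE X C A"
  by (rule abgrp_closed[OF egrp])
lemma eadd_zl[simp]: "C\<in>Obj X \<Longrightarrow> A\<in>Obj X \<Longrightarrow> d\<in>EE X C A \<Longrightarrow> eadd X C A (ezero X C A) d = d"
  by (rule abgrp_zl[OF egrp])
lemma eadd_zr[simp]: "C\<in>Obj X \<Longrightarrow> A\<in>Obj X \<Longrightarrow> d\<in>EE X C A \<Longrightarrow> eadd X C A d (ezero X C A) = d"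
  by (rule abgrp_zr[OF egrp])
lemma eadd_comm: "C\<in>Obj X \<Longrightarrow> A\<in>Obj X \<Longrightarrow> d\<in>EE X C A \<Longrightarrow> d'\<in>EE X C A \<Longrightarrow> eadd X C A d d' = eadd X C A d' d"
  by (rule abgrp_comm[OF egrp])
lemma eadd_assoc: "C\<in>Obj X \<Longrightarrow> A\<in>Obj X \<Longrightarrow> d\<in>EE X C A \<Longrightarrow> d'\<in>EE X C A \<Longrightarrow> d''\<in>EE X C A \<Longrightarrow>
  eadd X C A (eadd X C A d d') d'' = eadd X C A d (eadd X C A d' d'')"
  by (rule abgrp_assoc[OF egrp])

lemma push_EE[simp]: "C\<in>Obj X \<Longrightarrow> A\<in>Obj X \<Longrightarrow> A'\<in>Obj X \<Longrightarrow> a\<in>Hom X A A' \<Longrightarrow> d\<in>EE X C A \<Longrightarrow>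
   push X C A A' a d \<in> EE X C A'"
  using et1[unfolded ET1_def, THEN conjunct2, THEN conjunct1] by blast
lemma pull_EE[simp]: "C'\<in>Obj X \<Longrightarrow> C\<in>Obj X \<Longrightarrow> A\<in>Obj X \<Longrightarrow> c\<in>Hom X C' C \<Longrightarrow> d\<in>EE X C A \<Longrightarrow>
   pull X C' C A c d \<in> EE X C' A"
  using et1[unfolded ET1_def, THEN conjunct2, THEN conjunct2, THEN conjunct1] by blast
lemma push_eadd: "C\<in>Obj X \<Longrightarrow> A\<in>Obj X \<Longrightarrow> A'\<in>Obj X \<Longrightarrow> a\<in>Hom X A A' \<Longrightarrow> d\<in>EE X C A \<Longrightarrow> d'\<in>EE X C A \<Longrightarrow>
   push X C A A' a (eadd X C A d d') = eadd X C A' (push X C A A' a d) (push X C A A' a d')"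
  using et1[unfolded ET1_def, THEN conjunct2, THEN conjunct2, THEN conjunct2, THEN conjunct1] by blast
lemma push_madd: "C\<in>Obj X \<Longrightarrow> A\<in>Obj X \<Longrightarrow> A'\<in>Obj X \<Longrightarrow> a\<in>Hom X A A' \<Longrightarrow> b\<in>Hom X A A' \<Longrightarrow> d\<in>EE X C A \<Longrightarrow>
   push X C A A' (madd X A A' a b) d = eadd X C A' (push X C A A' a d) (push X C A A' b d)"
  using et1[unfolded ET1_def, THEN conjunct2, THEN conjunct2, THEN conjunct2, THEN conjunct2, THEN conjunct1] by blast
lemma pull_eadd: "C'\<in>Obj X \<Longrightarrow> C\<in>Obj X \<Longrightarrow> A\<in>Obj X \<Longrightarrow> c\<in>Hom X C' C \<Longrightarrow> d\<in>EE X C A \<Longrightarrow> d'\<in>EE X C A \<Longrightarrow>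
   pull X C' C A c (eadd X C A d d') = eadd X C' A (pull X C' C A c d) (pull X C' C A c d')"
  using et1[unfolded ET1_def, THEN conjunct2, THEN conjunct2, THEN conjunct2, THEN conjunct2, THEN conjunct2, THEN conjunct1] by blast
lemma pull_madd: "C'\<in>Obj X \<Longrightarrow> C\<in>Obj X \<Longrightarrow> A\<in>Obj X \<Longrightarrow> c\<in>Hom X C' C \<Longrightarrow> e\<in>Hom X C' C \<Longrightarrow> d\<in>EE X C A \<Longrightarrow>
   pull X C' C A (madd X C' C c e) d = eadd X C' A (pull X C' C A c d) (pull X C' C A e d)"
  using et1[unfolded ET1_def, THEN conjunct2, THEN conjunct2, THEN conjunct2, THEN conjunct2, THEN conjunct2, THEN conjunct2, THEN conjunct1] by blast
lemma push_id[simp]: "C\<in>Obj X \<Longrightarrow> A\<in>Obj X \<Longrightarrow> d\<in>EE X C A \<Longrightarrow> push X C A A (idm X A) d = d"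
  using et1[unfolded ET1_def, THEN conjunct2, THEN conjunct2, THEN conjunct2, THEN conjunct2, THEN conjunct2, THEN conjunct2, THEN conjunct2, THEN conjunct1] by blast
lemma pull_id[simp]: "C\<in>Obj X \<Longrightarrow> A\<in>Obj X \<Longrightarrow> d\<in>EE X C A \<Longrightarrow> pull X C C A (idm X C) d = d"
  using et1[unfolded ET1_def, THEN conjunct2, THEN conjunct2, THEN conjunct2, THEN conjunct2, THEN conjunct2, THEN conjunct2, THEN conjunct2, THEN conjunct1] by blast
lemma push_cmp: "C\<in>Obj X \<Longrightarrow> A\<in>Obj X \<Longrightarrow> A'\<in>Obj X \<Longrightarrow> A''\<in>Obj X \<Longrightarrow> a\<in>Hom X A A' \<Longrightarrow> a'\<in>Hom X A' A'' \<Longrightarrow>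
   d\<in>EE X C A \<Longrightarrow> push X C A A'' (cmp X A A' A'' a' a) d = push X C A' A'' a' (push X C A A' a d)"
  using et1[unfolded ET1_def, THEN conjunct2, THEN conjunct2, THEN conjunct2, THEN conjunct2, THEN conjunct2, THEN conjunct2, THEN conjunct2, THEN conjunct2, THEN conjunct1] by blast
lemma pull_cmp: "C''\<in>Obj X \<Longrightarrow> C'\<in>Obj X \<Longrightarrow> C\<in>Obj X \<Longrightarrow> A\<in>Obj X \<Longrightarrow> c'\<in>Hom X C'' C' \<Longrightarrow> c\<in>Hom X C' C \<Longrightarrow>
   d\<in>EE X C A \<Longrightarrow> pull X C'' C A (cmp X C'' C' C c c') d = pull X C'' C' A c' (pull X C' C A c d)"
  using et1[unfolded ET1_def, THEN conjunct2, THEN conjunct2, THEN conjunct2, THEN conjunct2, THEN conjunct2, THEN conjunct2, THEN conjunct2, THEN conjunct2, THEN conjunct2, THEN conjunct1] by blast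
lemma push_pull: "C'\<in>Obj X \<Longrightarrow> C\<in>Obj X \<Longrightarrow> A\<in>Obj X \<Longrightarrow> A'\<in>Obj X \<Longrightarrow> c\<in>Hom X C' C \<Longrightarrow> a\<in>Hom X A A' \<Longrightarrow>
   d\<in>EE X C A \<Longrightarrow> push X C' A A' a (pull X C' C A c d) = pull X C' C A' c (push X C A A' a d)"
  using et1[unfolded ET1_def, THEN conjunct2, THEN conjunct2, THEN conjunct2, THEN conjunct2, THEN conjunct2, THEN conjunct2, THEN conjunct2, THEN conjunct2, THEN conjunct2, THEN conjunct2] by blast

lemma push_ez[simp]: assumes "C\<in>Obj X" "A\<in>Obj X" "A'\<in>Obj X" "a\<in>Hom X A A'"
  shows "push X C A A' a (ezero X C A) = ezero X C A'"
proof -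
  have "push X C A A' a (ezero X C A) = eadd X C A' (push X C A A' a (ezero X C A)) (push X C A A' a (ezero X C A))"
    using push_eadd[of C A A' a "ezero X C A" "ezero X C A"] assms by simp
  thus ?thesis using abgrp_idem[OF egrp[of C A']] assms by simp
qed
lemma pull_ez[simp]: assumes "C'\<in>Obj X" "C\<in>Obj X" "A\<in>Obj X" "c\<in>Hom X C' C"
  shows "pull X C' C A c (ezero X C A) = ezero X C' A"
proof -
  have "pull X C' C A c (ezero X C A) = eadd X C' A (pull X C' C A c (ezero X C A)) (pull X C' C A c (ezero X C A))"
    using pull_eadd[of C' C A c "ezero X C A" "ezero X C A"] assms by simp
  thus ?thesis using abgrp_idem[OF egrp[of C' A]] assms by simp
qed
lemma push_mz[simp]: assumes "C\<in>Obj X" "A\<in>Obj X" "A'\<in>Obj X" "d\<in>EE X C A"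
  shows "push X C A A' (mzero X A A') d = ezero X C A'"
proof -
  have "push X C A A' (mzero X A A') d = eadd X C A' (push X C A A' (mzero X A A') d) (push X C A A' (mzero X A A') d)"
    using push_madd[of C A A' "mzero X A A'" "mzero X A A'" d] assms by simp
  thus ?thesis using abgrp_idem[OF egrp[of C A']] assms by simp
qed
lemma pull_mz[simp]: assumes "C'\<in>Obj X" "C\<in>Obj X" "A\<in>Obj X" "d\<in>EE X C A"
  shows "pull X C' C A (mzero X C' C) d = ezero X C' A"
proof -
  have "pull X C' C A (mzero X C' C) d = eadd X C' A (pull X C' C A (mzero X C' C) d) (pull X C' C A (mzero X C' C) d)"
    using pull_madd[of C' C A "mzero X C' C" "mzero X C' C" d] assms by simp
  thus ?thesis using abgrp_idem[OF egrp[of C' A]] assms by simp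
qed

lemma rlzD: "rlz X C A d B x y \<Longrightarrow>
   A \<in> Obj X \<and> C \<in> Obj X \<and> d \<in> EE X C A \<and> B \<in> Obj X \<and> x \<in> Hom X A B \<and> y \<in> Hom X B C"
  using et2[unfolded ET2_def, THEN conjunct1] by blast
lemma rlz_ex: "C\<in>Obj X \<Longrightarrow> A\<in>Obj X \<Longrightarrow> d\<in>EE X C A \<Longrightarrow> \<exists>B x y. rlz X C A d B x y"
  using et2[unfolded ET2_def, THEN conjunct2, THEN conjunct1] by blast
lemma rlz_mor: "rlz X C A d B x y \<Longrightarrow> rlz X C' A' d' B' x' y' \<Longrightarrow> a \<in> Hom X A A' \<Longrightarrow> c \<in> Hom X C C'
   \<Longrightarrow> push X C A A' a d = pull X C C' A' c d' \<Longrightarrow> \<exists>b. etri_mor X C A d B x y C' A' d' B' x' y' a b c"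
  using et2[unfolded ET2_def, THEN conjunct2, THEN conjunct2, THEN conjunct2, THEN conjunct2, THEN conjunct1] by blast
lemma rlz_split: "A\<in>Obj X \<Longrightarrow> C\<in>Obj X \<Longrightarrow> is_biprod X A C P i1 i2 p1 p2 \<Longrightarrow> rlz X C A (ezero X C A) P i1 p2"
  using et2[unfolded ET2_def, THEN conjunct2, THEN conjunct2, THEN conjunct2, THEN conjunct2, THEN conjunct2, THEN conjunct1] by blast

lemma ET3D: "rlz X C A d B x y \<Longrightarrow> rlz X C' A' d' B' x' y' \<Longrightarrow> a \<in> Hom X A A' \<Longrightarrow> b \<in> Hom X B B'
   \<Longrightarrow> cmp X A B B' b x = cmp X A A' B' x' a \<Longrightarrow> \<exists>c. etri_mor X C A d B x y C' A' d' B' x' y' a b c"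
  using et3[unfolded ET3_def] by blast
lemma ET3opD: "rlz X C A d B x y \<Longrightarrow> rlz X C' A' d' B' x' y' \<Longrightarrow> b \<in> Hom X B B' \<Longrightarrow> c \<in> Hom X C C'
   \<Longrightarrow> cmp X B C C' c y = cmp X B B' C' y' b \<Longrightarrow> \<exists>a. etri_mor X C A d B x y C' A' d' B' x' y' a b c"
  using et3op[unfolded ET3op_def] by blast

lemma biprodD: "is_biprod X A B P i1 i2 p1 p2 \<Longrightarrow>
     P \<in> Obj X \<and> i1 \<in> Hom X A P \<and> i2 \<in> Hom X B P \<and> p1 \<in> Hom X P A \<and> p2 \<in> Hom X P B
   \<and> cmp X A P A p1 i1 = idm X A \<and> cmp X B P B p2 i2 = idm X B
   \<and> cmp X A P B p2 i1 = mzero X A B \<and> cmp X B P A p1 i2 = mzero X B A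
   \<and> madd X P P (cmp X P A P i1 p1) (cmp X P B P i2 p2) = idm X P"
  unfolding is_biprod_def by simp


lemma etri_morD: "etri_mor X C A d B x y C' A' d' B' x' y' a b c \<Longrightarrow>
     a \<in> Hom X A A' \<and> b \<in> Hom X B B' \<and> c \<in> Hom X C C'
   \<and> cmp X A B B' b x = cmp X A A' B' x' a
   \<and> cmp X B C C' c y = cmp X B B' C' y' b
   \<and> push X C A A' a d = pull X C C' A' c d'"
  unfolding etri_mor_def by simp

lemma zobj': obtains Z where "Z\<in>Obj X" "\<And>A. A\<in>Obj X \<Longrightarrow> Hom X A Z = {mzero X A Z}"
   "\<And>A. A\<in>Obj X \<Longrightarrow> Hom X Z A = {mzero X Z A}"
  using zobj by blast

lemma tri_comp_zero: assumes r: "rlz X C A d B x y" shows "cmp X A B C y x = mzero X A C"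
proof -
  from rlzD[OF r] have o: "A\<in>Obj X" "C\<in>Obj X" "d\<in>EE X C A" "B\<in>Obj X" "x\<in>Hom X A B" "y\<in>Hom X B C" by auto
  obtain Z where Z: "Z\<in>Obj X" using zobj by blast
  obtain P i1 i2 p1 p2 where bp: "is_biprod X A Z P i1 i2 p1 p2" using biprod_ex o Z by blast
  note b = biprodD[OF bp]
  have r0: "rlz X Z A (ezero X Z A) P i1 p2" using rlz_split o Z bp by blast
  have e1: "cmp X A P B (cmp X P A B x p1) i1 = x"
  proof -
    have "cmp X A P B (cmp X P A B x p1) i1 = cmp X A A B x (cmp X A P A p1 i1)"
      by (rule assoc[symmetric]) (simp_all add: o b)
    also have "\<dots> = x" using o b by simp
    finally show ?thesis .
  qed
  hence "cmp X A P B (cmp X P A B x p1) i1 = cmp X A A B x (idm X A)" using o by simp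
  then obtain c where m: "etri_mor X Z A (ezero X Z A) P i1 p2 C A d B x y (idm X A) (cmp X P A B x p1) c"
    using ET3D[OF r0 r, of "idm X A" "cmp X P A B x p1"] o b by auto
  hence c: "c \<in> Hom X Z C" "cmp X P Z C c p2 = cmp X P B C y (cmp X P A B x p1)"
    using etri_morD by auto
  have "cmp X A B C y x = cmp X A B C y (cmp X A P B (cmp X P A B x p1) i1)" using e1 by simp
  also have "\<dots> = cmp X A P C (cmp X P B C y (cmp X P A B x p1)) i1"
    by (rule assoc) (simp_all add: o b)
  also have "\<dots> = cmp X A P C (cmp X P Z C c p2) i1" using c by simp
  also have "\<dots> = cmp X A Z C c (cmp X A P Z p2 i1)"
    by (rule assoc[symmetric]) (simp_all add: o b c Z)
  also have "\<dots> = mzero X A C" using b o Z c by simp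
  finally show ?thesis .
qed

lemma tri_push_self: assumes r: "rlz X C A d B x y" shows "push X C A B x d = ezero X C B"
proof -
  from rlzD[OF r] have o: "A\<in>Obj X" "C\<in>Obj X" "d\<in>EE X C A" "B\<in>Obj X" "x\<in>Hom X A B" "y\<in>Hom X B C" by auto
  obtain Z where Z: "Z\<in>Obj X" using zobj by blast
  obtain P i1 i2 p1 p2 where bp: "is_biprod X B Z P i1 i2 p1 p2" using biprod_ex o Z by blast
  note b = biprodD[OF bp]
  have r0: "rlz X Z B (ezero X Z B) P i1 p2" using rlz_split o Z bp by blast
  obtain c where m: "etri_mor X C A d B x y Z B (ezero X Z B) P i1 p2 x i1 c"
    using ET3D[OF r r0, of x i1] o b by auto
  hence "c \<in> Hom X C Z" "push X C A B x d = pull X C Z B c (ezero X Z B)" using etri_morD by auto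
  thus ?thesis using o Z by simp
qed

lemma tri_pull_self: assumes r: "rlz X C A d B x y" shows "pull X B C A y d = ezero X B A"
proof -
  from rlzD[OF r] have o: "A\<in>Obj X" "C\<in>Obj X" "d\<in>EE X C A" "B\<in>Obj X" "x\<in>Hom X A B" "y\<in>Hom X B C" by auto
  obtain Z where Z: "Z\<in>Obj X" using zobj by blast
  obtain P i1 i2 p1 p2 where bp: "is_biprod X Z B P i1 i2 p1 p2" using biprod_ex o Z by blast
  note b = biprodD[OF bp]
  have r0: "rlz X B Z (ezero X B Z) P i1 p2" using rlz_split o Z bp by blast
  obtain a where m: "etri_mor X B Z (ezero X B Z) P i1 p2 C A d B x y a p2 y"
    using ET3opD[OF r0 r, of p2 y] o b by auto
  hence "a \<in> Hom X Z A" "push X B Z A a (ezero X B Z) = pull X B C A y d" using etri_morD by auto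
  thus ?thesis using o Z by simp
qed

lemma tri_fac_infl: assumes r: "rlz X C A d B x y" and W: "W\<in>Obj X" and u: "u\<in>Hom X W B"
  and z: "cmp X W B C y u = mzero X W C"
  shows "\<exists>a\<in>Hom X W A. u = cmp X W A B x a"
proof -
  from rlzD[OF r] have o: "A\<in>Obj X" "C\<in>Obj X" "d\<in>EE X C A" "B\<in>Obj X" "x\<in>Hom X A B" "y\<in>Hom X B C" by auto
  obtain Z where Z: "Z\<in>Obj X" using zobj by blast
  obtain P i1 i2 p1 p2 where bp: "is_biprod X W Z P i1 i2 p1 p2" using biprod_ex W Z by blast
  note b = biprodD[OF bp]
  have r0: "rlz X Z W (ezero X Z W) P i1 p2" using rlz_split W Z bp by blast
  have sq: "cmp X P Z C (mzero X Z C) p2 = cmp X P B C y (cmp X P W B u p1)"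
  proof -
    have "cmp X P B C y (cmp X P W B u p1) = cmp X P W C (cmp X W B C y u) p1"
      by (rule assoc) (simp_all add: o b u W)
    thus ?thesis using z o b W Z by simp
  qed
  obtain a where m: "etri_mor X Z W (ezero X Z W) P i1 p2 C A d B x y a (cmp X P W B u p1) (mzero X Z C)"
    using ET3opD[OF r0 r, of "cmp X P W B u p1" "mzero X Z C"] o b u W Z sq by auto
  hence a: "a \<in> Hom X W A" "cmp X W P B (cmp X P W B u p1) i1 = cmp X W A B x a" using etri_morD by auto
  have "cmp X W P B (cmp X P W B u p1) i1 = cmp X W W B u (cmp X W P W p1 i1)"
    by (rule assoc[symmetric]) (simp_all add: o b u W)
  also have "\<dots> = u" using b u W o by simp
  finally show ?thesis using a by auto
qed

lemma tri_fac_defl: assumes r: "rlz X C A d B x y" and W: "W\<in>Obj X" and c: "c\<in>Hom X W C"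
  and z: "pull X W C A c d = ezero X W A"
  shows "\<exists>t\<in>Hom X W B. c = cmp X W B C y t"
proof -
  from rlzD[OF r] have o: "A\<in>Obj X" "C\<in>Obj X" "d\<in>EE X C A" "B\<in>Obj X" "x\<in>Hom X A B" "y\<in>Hom X B C" by auto
  obtain P i1 i2 p1 p2 where bp: "is_biprod X A W P i1 i2 p1 p2" using biprod_ex W o by blast
  note b = biprodD[OF bp]
  have r0: "rlz X W A (ezero X W A) P i1 p2" using rlz_split W o bp by blast
  obtain bb where m: "etri_mor X W A (ezero X W A) P i1 p2 C A d B x y (idm X A) bb c"
    using rlz_mor[OF r0 r, of "idm X A" c] o c W z by auto
  hence bb: "bb \<in> Hom X P B" "cmp X P W C c p2 = cmp X P B C y bb" using etri_morD by auto
  have "c = cmp X W W C c (cmp X W P W p2 i2)" using b c W o by simp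
  also have "\<dots> = cmp X W P C (cmp X P W C c p2) i2" by (rule assoc) (simp_all add: o b c W)
  also have "\<dots> = cmp X W P C (cmp X P B C y bb) i2" using bb by simp
  also have "\<dots> = cmp X W B C y (cmp X W P B bb i2)" by (rule assoc[symmetric]) (simp_all add: o b bb W)
  finally show ?thesis using bb b o W by auto
qed

lemma tri_fac_infl_ext: assumes r: "rlz X C A d B x y" and A': "A'\<in>Obj X" and a: "a\<in>Hom X A A'"
  and z: "push X C A A' a d = ezero X C A'"
  shows "\<exists>s\<in>Hom X B A'. a = cmp X A B A' s x"
proof -
  from rlzD[OF r] have o: "A\<in>Obj X" "C\<in>Obj X" "d\<in>EE X C A" "B\<in>Obj X" "x\<in>Hom X A B" "y\<in>Hom X B C" by auto
  obtain P i1 i2 p1 p2 where bp: "is_biprod X A' C P i1 i2 p1 p2" using biprod_ex A' o by blast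
  note b = biprodD[OF bp]
  have r0: "rlz X C A' (ezero X C A') P i1 p2" using rlz_split A' o bp by blast
  obtain bb where m: "etri_mor X C A d B x y C A' (ezero X C A') P i1 p2 a bb (idm X C)"
    using rlz_mor[OF r r0, of a "idm X C"] o a A' z by auto
  hence bb: "bb \<in> Hom X B P" "cmp X A B P bb x = cmp X A A' P i1 a" using etri_morD by auto
  have "a = cmp X A A' A' (cmp X A' P A' p1 i1) a" using b a A' o by simp
  also have "\<dots> = cmp X A P A' p1 (cmp X A A' P i1 a)" by (rule assoc[symmetric]) (simp_all add: o b a A')
  also have "\<dots> = cmp X A P A' p1 (cmp X A B P bb x)" using bb by simp
  also have "\<dots> = cmp X A B A' (cmp X B P A' p1 bb) x" by (rule assoc) (simp_all add: o b bb A')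
  finally show ?thesis using bb b o A' by auto
qed


lemma ET4E: assumes "rlz X D A d B f f'" "rlz X F B d' C g g'"
  obtains E h' dd e d'' where "E\<in>Obj X" "dd\<in>Hom X D E" "e\<in>Hom X E F"
    "rlz X E A d'' C (cmp X A B C g f) h'" "cmp X B D E dd f' = cmp X B C E h' g"
    "cmp X C E F e h' = g'" "rlz X F D (push X F B D f' d') E dd e"
    "pull X D E A dd d'' = d" "push X E A B f d'' = pull X E F B e d'"
  using et4[unfolded ET4_def, rule_format, OF conjI[OF assms]] that by blast

lemma ET4opE: assumes "rlz X B D d A f' f" "rlz X C F d' B g' g"
  obtains E h' dd e d'' where "E\<in>Obj X" "dd\<in>Hom X D E" "e\<in>Hom X E F"
    "rlz X C E d'' A h' (cmp X A B C g f)" "cmp X D E A h' dd = f'"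
    "cmp X E A B f h' = cmp X E F B g' e" "rlz X F D (pull X F B D g' d) E dd e"
    "d' = push X C E F e d''" "push X B D E dd d = pull X B C E g d''"
  using et4op[unfolded ET4op_def, rule_format, OF conjI[OF assms]] that by blast

lemma tri_ext_pull: assumes r: "rlz X C A d E e y" and W: "W\<in>Obj X" and xi: "xi\<in>EE X W A"
  and z: "push X W A E e xi = ezero X W E"
  shows "\<exists>g\<in>Hom X W C. xi = pull X W C A g d"
proof -
  from rlzD[OF r] have o: "A\<in>Obj X" "C\<in>Obj X" "d\<in>EE X C A" "E\<in>Obj X" "e\<in>Hom X A E" "y\<in>Hom X E C" by auto
  obtain Y f q where rx: "rlz X W A xi Y f q" using rlz_ex W o xi by blast
  from rlzD[OF rx] have oY: "Y\<in>Obj X" "f\<in>Hom X A Y" by auto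
  obtain s where s: "s\<in>Hom X Y E" "e = cmp X A Y E s f" using tri_fac_infl_ext[OF rx o(4) o(5) z] by blast
  obtain g where "etri_mor X W A xi Y f q C A d E e y (idm X A) s g"
    using ET3D[OF rx r, of "idm X A" s] s o by auto
  hence "g\<in>Hom X W C" "push X W A A (idm X A) xi = pull X W C A g d" using etri_morD by auto
  thus ?thesis using o W xi by auto
qed

lemma tri_ext_push: assumes r: "rlz X C K g P k p" and B': "B'\<in>Obj X" and eta: "eta\<in>EE X C B'"
  and z: "pull X P C B' p eta = ezero X P B'"
  shows "\<exists>v\<in>Hom X K B'. eta = push X C K B' v g"
proof -
  from rlzD[OF r] have o: "K\<in>Obj X" "C\<in>Obj X" "g\<in>EE X C K" "P\<in>Obj X" "k\<in>Hom X K P" "p\<in>Hom X P C" by auto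
  obtain Y f q where re: "rlz X C B' eta Y f q" using rlz_ex B' o eta by blast
  from rlzD[OF re] have oY: "Y\<in>Obj X" "q\<in>Hom X Y C" by auto
  obtain t where t: "t\<in>Hom X P Y" "p = cmp X P Y C q t" using tri_fac_defl[OF re o(4) o(6) z] by blast
  obtain v where "etri_mor X C K g P k p C B' eta Y f q v t (idm X C)"
    using ET3opD[OF r re, of t "idm X C"] t o by auto
  hence "v\<in>Hom X K B'" "push X C K B' v g = pull X C C B' (idm X C) eta" using etri_morD by auto
  thus ?thesis using o B' eta by auto
qed

lemma tri_cov_exact: assumes r: "rlz X C A d B x y" and W: "W\<in>Obj X" and th: "th\<in>EE X W B"
  and z: "push X W B C y th = ezero X W C"
  shows "\<exists>ze\<in>EE X W A. th = push X W A B x ze"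
proof -
  from rlzD[OF r] have o: "A\<in>Obj X" "C\<in>Obj X" "d\<in>EE X C A" "B\<in>Obj X" "x\<in>Hom X A B" "y\<in>Hom X B C" by auto
  obtain Y f g where rt: "rlz X W B th Y f g" using rlz_ex W o th by blast
  from rlzD[OF rt] have oY: "Y\<in>Obj X" "f\<in>Hom X B Y" "g\<in>Hom X Y W" by auto
  obtain E h' dd e d'' where E: "E\<in>Obj X" "dd\<in>Hom X C E" "e\<in>Hom X E W"
    "rlz X E A d'' Y (cmp X A B Y f x) h'"
    "rlz X W C (push X W B C y th) E dd e"
    "push X E A B x d'' = pull X E W B e th"
    by (rule ET4E[OF r rt]) blast
  have d'': "d''\<in>EE X E A" using rlzD[OF E(4)] by auto
  have r0: "rlz X W C (ezero X W C) E dd e" using E(5) z by simp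
  obtain s where s: "s\<in>Hom X W E" "idm X W = cmp X W E W e s"
    using tri_fac_defl[OF r0 W id_hom[OF W]] W o by auto
  have "th = pull X W W B (idm X W) th" using W o th by simp
  also have "\<dots> = pull X W E B s (pull X E W B e th)" using s pull_cmp[of W E W B s e th] W E o th by simp
  also have "\<dots> = pull X W E B s (push X E A B x d'')" using E by simp
  also have "\<dots> = push X W A B x (pull X W E A s d'')" using push_pull[of W E A B s x d''] s W E o d'' by simp
  finally show ?thesis using s W E o d'' by auto
qed


lemma madd_zero_other: "A\<in>Obj X \<Longrightarrow> B\<in>Obj X \<Longrightarrow> f\<in>Hom X A B \<Longrightarrow> g\<in>Hom X A B \<Longrightarrow>
   madd X A B f g = mzero X A B \<Longrightarrow> f = mzero X A B \<Longrightarrow> g = mzero X A B"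
  by simp

lemma split_biprod:
  assumes r: "rlz X A K (ezero X A K) E0 dd ee" and t: "t\<in>Hom X E0 K"
    and td: "cmp X K E0 K t dd = idm X K"
  shows "\<exists>s. is_biprod X A K E0 s dd ee t"
proof -
  from rlzD[OF r] have o: "K\<in>Obj X" "A\<in>Obj X" "E0\<in>Obj X" "dd\<in>Hom X K E0" "ee\<in>Hom X E0 A" by auto
  have ed: "cmp X K E0 A ee dd = mzero X K A" using tri_comp_zero[OF r] .
  obtain s0 where s0: "s0\<in>Hom X A E0" "idm X A = cmp X A E0 A ee s0"
    using tri_fac_defl[OF r o(2) id_hom[OF o(2)]] o by auto
  define q where "q = cmp X A K E0 dd (cmp X A E0 K t s0)"
  have q: "q\<in>Hom X A E0" unfolding q_def using o t s0 by simp
  obtain n' where n': "n'\<in>Hom X A E0" "madd X A E0 q n' = mzero X A E0" using madd_inv[OF o(2) o(3) q] by blast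
  define s where "s = madd X A E0 s0 n'"
  have sH: "s\<in>Hom X A E0" unfolding s_def using o s0 n' by simp
  have eq: "cmp X A E0 A ee q = mzero X A A"
  proof -
    have "cmp X A E0 A ee q = cmp X A K A (cmp X K E0 A ee dd) (cmp X A E0 K t s0)"
      unfolding q_def by (rule assoc) (simp_all add: o t s0)
    thus ?thesis using ed o t s0 by simp
  qed
  have "cmp X A E0 A ee (madd X A E0 q n') = madd X A A (cmp X A E0 A ee q) (cmp X A E0 A ee n')"
    by (rule dist_r) (simp_all add: o q n')
  hence en: "cmp X A E0 A ee n' = mzero X A A" using eq n' o by simp
  have es: "cmp X A E0 A ee s = idm X A"
  proof -
    have "cmp X A E0 A ee s = madd X A A (cmp X A E0 A ee s0) (cmp X A E0 A ee n')"
      unfolding s_def by (rule dist_r) (simp_all add: o s0 n')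
    thus ?thesis using en s0 o by simp
  qed
  have tq: "cmp X A E0 K t q = cmp X A E0 K t s0"
  proof -
    have "cmp X A E0 K t q = cmp X A K K (cmp X K E0 K t dd) (cmp X A E0 K t s0)"
      unfolding q_def by (rule assoc) (simp_all add: o t s0)
    thus ?thesis using td o t s0 by simp
  qed
  have "cmp X A E0 K t (madd X A E0 q n') = madd X A K (cmp X A E0 K t q) (cmp X A E0 K t n')"
    by (rule dist_r) (simp_all add: o q n' t)
  hence tn: "madd X A K (cmp X A E0 K t s0) (cmp X A E0 K t n') = mzero X A K" using tq n' o t by simp
  have ts: "cmp X A E0 K t s = mzero X A K"
  proof -
    have "cmp X A E0 K t s = madd X A K (cmp X A E0 K t s0) (cmp X A E0 K t n')"
      unfolding s_def by (rule dist_r) (simp_all add: o s0 n' t)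
    thus ?thesis using tn by simp
  qed
  define Q where "Q = madd X E0 E0 (cmp X E0 A E0 s ee) (cmp X E0 K E0 dd t)"
  have QH: "Q\<in>Hom X E0 E0" unfolding Q_def using o t sH by simp
  obtain m' where m': "m'\<in>Hom X E0 E0" "madd X E0 E0 Q m' = mzero X E0 E0" using madd_inv[OF o(3) o(3) QH] by blast
  define u where "u = madd X E0 E0 (idm X E0) m'"
  have uH: "u\<in>Hom X E0 E0" unfolding u_def using o m' by simp
  have eQ: "cmp X E0 E0 A ee Q = ee"
  proof -
    have "cmp X E0 E0 A ee Q = madd X E0 A (cmp X E0 E0 A ee (cmp X E0 A E0 s ee)) (cmp X E0 E0 A ee (cmp X E0 K E0 dd t))"
      unfolding Q_def by (rule dist_r) (simp_all add: o sH t)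
    also have "cmp X E0 E0 A ee (cmp X E0 A E0 s ee) = cmp X E0 A A (cmp X A E0 A ee s) ee"
      by (rule assoc) (simp_all add: o sH)
    also have "cmp X E0 E0 A ee (cmp X E0 K E0 dd t) = cmp X E0 K A (cmp X K E0 A ee dd) t"
      by (rule assoc) (simp_all add: o t)
    finally show ?thesis using es ed o t by simp
  qed
  have "cmp X E0 E0 A ee (madd X E0 E0 Q m') = madd X E0 A (cmp X E0 E0 A ee Q) (cmp X E0 E0 A ee m')"
    by (rule dist_r) (simp_all add: o QH m')
  hence em: "madd X E0 A ee (cmp X E0 E0 A ee m') = mzero X E0 A" using eQ m' o by simp
  have eu: "cmp X E0 E0 A ee u = mzero X E0 A"
  proof -
    have "cmp X E0 E0 A ee u = madd X E0 A (cmp X E0 E0 A ee (idm X E0)) (cmp X E0 E0 A ee m')"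
      unfolding u_def by (rule dist_r) (simp_all add: o m')
    thus ?thesis using em o by simp
  qed
  obtain w where w: "w\<in>Hom X E0 K" "u = cmp X E0 K E0 dd w" using tri_fac_infl[OF r o(3) uH eu] by blast
  have tQ: "cmp X E0 E0 K t Q = t"
  proof -
    have "cmp X E0 E0 K t Q = madd X E0 K (cmp X E0 E0 K t (cmp X E0 A E0 s ee)) (cmp X E0 E0 K t (cmp X E0 K E0 dd t))"
      unfolding Q_def by (rule dist_r) (simp_all add: o sH t)
    also have "cmp X E0 E0 K t (cmp X E0 A E0 s ee) = cmp X E0 A K (cmp X A E0 K t s) ee"
      by (rule assoc) (simp_all add: o sH t)
    also have "cmp X E0 E0 K t (cmp X E0 K E0 dd t) = cmp X E0 K K (cmp X K E0 K t dd) t"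
      by (rule assoc) (simp_all add: o t)
    finally show ?thesis using ts td o t by simp
  qed
  have "cmp X E0 E0 K t (madd X E0 E0 Q m') = madd X E0 K (cmp X E0 E0 K t Q) (cmp X E0 E0 K t m')"
    by (rule dist_r) (simp_all add: o QH m' t)
  hence tm: "madd X E0 K t (cmp X E0 E0 K t m') = mzero X E0 K" using tQ m' o t by simp
  have tu: "cmp X E0 E0 K t u = mzero X E0 K"
  proof -
    have "cmp X E0 E0 K t u = madd X E0 K (cmp X E0 E0 K t (idm X E0)) (cmp X E0 E0 K t m')"
      unfolding u_def by (rule dist_r) (simp_all add: o m' t)
    thus ?thesis using tm o t by simp
  qed
  have "w = cmp X E0 K K (cmp X K E0 K t dd) w" using td w o by simp
  also have "\<dots> = cmp X E0 E0 K t (cmp X E0 K E0 dd w)" by (rule assoc[symmetric]) (simp_all add: o t w)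
  also have "\<dots> = mzero X E0 K" using tu w by simp
  finally have "w = mzero X E0 K" .
  hence "u = mzero X E0 E0" using w o by simp
  hence "madd X E0 E0 (idm X E0) m' = mzero X E0 E0" unfolding u_def .
  hence QI: "Q = idm X E0" using abgrp_inv_uniq[OF hgrp[OF o(3) o(3)], of Q "idm X E0" m'] QH m' o by simp
  show ?thesis unfolding is_biprod_def using o sH t es td ts ed QI unfolding Q_def by blast
qed


lemma pull_bp1: assumes bp: "is_biprod X C1 C2 P j1 j2 q1 q2" and o: "C1\<in>Obj X" "C2\<in>Obj X" "A\<in>Obj X"
  and d: "d1\<in>EE X C1 A" "d2\<in>EE X C2 A"
  shows "pull X C1 P A j1 (eadd X P A (pull X P C1 A q1 d1) (pull X P C2 A q2 d2)) = d1"
proof -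
  note b = biprodD[OF bp]
  have "pull X C1 P A j1 (eadd X P A (pull X P C1 A q1 d1) (pull X P C2 A q2 d2))
      = eadd X C1 A (pull X C1 P A j1 (pull X P C1 A q1 d1)) (pull X C1 P A j1 (pull X P C2 A q2 d2))"
    by (rule pull_eadd) (simp_all add: b o d)
  also have "pull X C1 P A j1 (pull X P C1 A q1 d1) = pull X C1 C1 A (cmp X C1 P C1 q1 j1) d1"
    by (rule pull_cmp[symmetric]) (simp_all add: b o d)
  also have "pull X C1 P A j1 (pull X P C2 A q2 d2) = pull X C1 C2 A (cmp X C1 P C2 q2 j1) d2"
    by (rule pull_cmp[symmetric]) (simp_all add: b o d)
  finally show ?thesis using b o d by simp
qed

lemma pull_bp2: assumes bp: "is_biprod X C1 C2 P j1 j2 q1 q2" and o: "C1\<in>Obj X" "C2\<in>Obj X" "A\<in>Obj X"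
  and d: "d1\<in>EE X C1 A" "d2\<in>EE X C2 A"
  shows "pull X C2 P A j2 (eadd X P A (pull X P C1 A q1 d1) (pull X P C2 A q2 d2)) = d2"
proof -
  note b = biprodD[OF bp]
  have "pull X C2 P A j2 (eadd X P A (pull X P C1 A q1 d1) (pull X P C2 A q2 d2))
      = eadd X C2 A (pull X C2 P A j2 (pull X P C1 A q1 d1)) (pull X C2 P A j2 (pull X P C2 A q2 d2))"
    by (rule pull_eadd) (simp_all add: b o d)
  also have "pull X C2 P A j2 (pull X P C1 A q1 d1) = pull X C2 C1 A (cmp X C2 P C1 q1 j2) d1"
    by (rule pull_cmp[symmetric]) (simp_all add: b o d)
  also have "pull X C2 P A j2 (pull X P C2 A q2 d2) = pull X C2 C2 A (cmp X C2 P C2 q2 j2) d2"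
    by (rule pull_cmp[symmetric]) (simp_all add: b o d)
  finally show ?thesis using b o d by simp
qed

end

locale xti = xt +
  fixes I :: "'o \<Rightarrow> 'o \<Rightarrow> 'm set"
  assumes idl: "ideal X I"
begin

lemma IstarI: "C\<in>Obj X \<Longrightarrow> i\<in>I W C \<Longrightarrow> d\<in>EE X C A \<Longrightarrow> pull X W C A i d \<in> Istar X I W A"
  unfolding Istar_def by blast
lemma IstarE: "x\<in>Istar X I W A \<Longrightarrow> (\<And>C i d. C\<in>Obj X \<Longrightarrow> i\<in>I W C \<Longrightarrow> d\<in>EE X C A \<Longrightarrow> x = pull X W C A i d \<Longrightarrow> P) \<Longrightarrow> P"
  unfolding Istar_def by blast

lemma idl_hom: "A\<in>Obj X \<Longrightarrow> B\<in>Obj X \<Longrightarrow> f\<in>I A B \<Longrightarrow> f\<in>Hom X A B"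
  using idl unfolding ideal_def by blast
lemma idl_zero: "A\<in>Obj X \<Longrightarrow> B\<in>Obj X \<Longrightarrow> mzero X A B \<in> I A B"
  using idl unfolding ideal_def by blast
lemma idl_add: "A\<in>Obj X \<Longrightarrow> B\<in>Obj X \<Longrightarrow> f\<in>I A B \<Longrightarrow> g\<in>I A B \<Longrightarrow> madd X A B f g \<in> I A B"
  using idl unfolding ideal_def by blast
lemma idl_comp: "W\<in>Obj X \<Longrightarrow> A\<in>Obj X \<Longrightarrow> B\<in>Obj X \<Longrightarrow> Z\<in>Obj X \<Longrightarrow> f\<in>I A B \<Longrightarrow> u\<in>Hom X W A \<Longrightarrow> v\<in>Hom X B Z
  \<Longrightarrow> cmp X W B Z v (cmp X W A B f u) \<in> I W Z"
  using idl[unfolded ideal_def, THEN conjunct2] by blast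
lemma idl_r: "W\<in>Obj X \<Longrightarrow> A\<in>Obj X \<Longrightarrow> B\<in>Obj X \<Longrightarrow> f\<in>I A B \<Longrightarrow> u\<in>Hom X W A \<Longrightarrow> cmp X W A B f u \<in> I W B"
  using idl_comp[of W A B B f u "idm X B"] idl_hom by simp
lemma idl_l: "A\<in>Obj X \<Longrightarrow> B\<in>Obj X \<Longrightarrow> Z\<in>Obj X \<Longrightarrow> f\<in>I A B \<Longrightarrow> v\<in>Hom X B Z \<Longrightarrow> cmp X A B Z v f \<in> I A Z"
  using idl_comp[of A A B Z f "idm X A" v] idl_hom by simp

lemma Istar_sub: "W\<in>Obj X \<Longrightarrow> A\<in>Obj X \<Longrightarrow> x\<in>Istar X I W A \<Longrightarrow> x\<in>EE X W A"
  by (erule IstarE) (simp add: idl_hom)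

lemma Istar_subfunctor: "add_subfunctor X (Istar X I)"
proof -
  have A1: "\<And>W A. W\<in>Obj X \<Longrightarrow> A\<in>Obj X \<Longrightarrow> Istar X I W A \<subseteq> EE X W A" using Istar_sub by blast
  have A2: "\<And>W A. W\<in>Obj X \<Longrightarrow> A\<in>Obj X \<Longrightarrow> ezero X W A \<in> Istar X I W A"
  proof -
    fix W A assume o: "W\<in>Obj X" "A\<in>Obj X"
    have "pull X W W A (mzero X W W) (ezero X W A) \<in> Istar X I W A" by (rule IstarI) (simp_all add: o idl_zero)
    thus "ezero X W A \<in> Istar X I W A" using o by simp
  qed
  have A3: "\<And>W A d d'. W\<in>Obj X \<Longrightarrow> A\<in>Obj X \<Longrightarrow> d\<in>Istar X I W A \<Longrightarrow> d'\<in>Istar X I W A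
      \<Longrightarrow> eadd X W A d d' \<in> Istar X I W A"
  proof -
    fix W A d d' assume o: "W\<in>Obj X" "A\<in>Obj X" and d: "d\<in>Istar X I W A" "d'\<in>Istar X I W A"
    obtain C1 i1 d1 where 1: "C1\<in>Obj X" "i1\<in>I W C1" "d1\<in>EE X C1 A" "d = pull X W C1 A i1 d1" using d(1) by (rule IstarE)
    obtain C2 i2 d2 where 2: "C2\<in>Obj X" "i2\<in>I W C2" "d2\<in>EE X C2 A" "d' = pull X W C2 A i2 d2" using d(2) by (rule IstarE)
    have h1: "i1\<in>Hom X W C1" "i2\<in>Hom X W C2" using 1 2 o idl_hom by auto
    obtain P j1 j2 q1 q2 where bp: "is_biprod X C1 C2 P j1 j2 q1 q2" using biprod_ex 1 2 by blast
    note b = biprodD[OF bp]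
    define dl where "dl = eadd X P A (pull X P C1 A q1 d1) (pull X P C2 A q2 d2)"
    have dl: "dl\<in>EE X P A" unfolding dl_def using b 1 2 o by simp
    define m where "m = madd X W P (cmp X W C1 P j1 i1) (cmp X W C2 P j2 i2)"
    have mI: "m \<in> I W P" unfolding m_def using idl_add idl_l 1 2 b o by simp
    have "pull X W P A m dl = eadd X W A (pull X W P A (cmp X W C1 P j1 i1) dl) (pull X W P A (cmp X W C2 P j2 i2) dl)"
      unfolding m_def by (rule pull_madd) (simp_all add: b o h1 1 2 dl)
    also have "pull X W P A (cmp X W C1 P j1 i1) dl = pull X W C1 A i1 (pull X C1 P A j1 dl)"
      by (rule pull_cmp) (simp_all add: b o h1 1 2 dl)
    also have "pull X W P A (cmp X W C2 P j2 i2) dl = pull X W C2 A i2 (pull X C2 P A j2 dl)"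
      by (rule pull_cmp) (simp_all add: b o h1 1 2 dl)
    finally have "pull X W P A m dl = eadd X W A d d'"
      unfolding dl_def using pull_bp1[OF bp] pull_bp2[OF bp] 1 2 o by simp
    moreover have "pull X W P A m dl \<in> Istar X I W A" using IstarI[of P m W dl A] b mI dl by simp
    ultimately show "eadd X W A d d' \<in> Istar X I W A" by simp
  qed
  have A4: "\<And>W A d. W\<in>Obj X \<Longrightarrow> A\<in>Obj X \<Longrightarrow> d\<in>Istar X I W A
      \<Longrightarrow> \<exists>d'\<in>Istar X I W A. eadd X W A d d' = ezero X W A"
  proof -
    fix W A d assume o: "W\<in>Obj X" "A\<in>Obj X" and d: "d\<in>Istar X I W A"
    obtain C i e where 1: "C\<in>Obj X" "i\<in>I W C" "e\<in>EE X C A" "d = pull X W C A i e" using d by (rule IstarE)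
    have h: "i\<in>Hom X W C" using 1 o idl_hom by auto
    obtain e' where e': "e'\<in>EE X C A" "eadd X C A e e' = ezero X C A" using abgrp_inv[OF egrp[OF 1(1) o(2)] 1(3)] by blast
    have "eadd X W A d (pull X W C A i e') = pull X W C A i (eadd X C A e e')"
      using pull_eadd[of W C A i e e'] 1 e' o h by simp
    also have "\<dots> = ezero X W A" using e' o 1 h by simp
    finally show "\<exists>d'\<in>Istar X I W A. eadd X W A d d' = ezero X W A" using IstarI[OF 1(1) 1(2) e'(1)] by blast
  qed
  have A5: "\<And>C A A' a d. C\<in>Obj X \<Longrightarrow> A\<in>Obj X \<Longrightarrow> A'\<in>Obj X \<Longrightarrow> a\<in>Hom X A A' \<Longrightarrow> d\<in>Istar X I C A
      \<Longrightarrow> push X C A A' a d \<in> Istar X I C A'"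
  proof -
    fix W A A' a d assume o: "W\<in>Obj X" "A\<in>Obj X" "A'\<in>Obj X" "a\<in>Hom X A A'" and d: "d\<in>Istar X I W A"
    obtain C i e where 1: "C\<in>Obj X" "i\<in>I W C" "e\<in>EE X C A" "d = pull X W C A i e" using d by (rule IstarE)
    have h: "i\<in>Hom X W C" using 1 o idl_hom by auto
    have "push X W A A' a d = pull X W C A' i (push X C A A' a e)" using push_pull[of W C A A' i a e] 1 o h by simp
    thus "push X W A A' a d \<in> Istar X I W A'" using IstarI[OF 1(1) 1(2), of "push X C A A' a e" A'] 1 o by simp
  qed
  have A6: "\<And>C' C A c d. C'\<in>Obj X \<Longrightarrow> C\<in>Obj X \<Longrightarrow> A\<in>Obj X \<Longrightarrow> c\<in>Hom X C' C \<Longrightarrow> d\<in>Istar X I C A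
      \<Longrightarrow> pull X C' C A c d \<in> Istar X I C' A"
  proof -
    fix W' W A c d assume o: "W'\<in>Obj X" "W\<in>Obj X" "A\<in>Obj X" "c\<in>Hom X W' W" and d: "d\<in>Istar X I W A"
    obtain C i e where 1: "C\<in>Obj X" "i\<in>I W C" "e\<in>EE X C A" "d = pull X W C A i e" using d by (rule IstarE)
    have h: "i\<in>Hom X W C" using 1 o idl_hom by auto
    have "pull X W' W A c d = pull X W' C A (cmp X W' W C i c) e" using pull_cmp[of W' W C A c i e] 1 o h by simp
    moreover have "cmp X W' W C i c \<in> I W' C" using idl_r 1 o by simp
    ultimately show "pull X W' W A c d \<in> Istar X I W' A" using IstarI[of C "cmp X W' W C i c" W' e A] 1 by simp
  qed
  show ?thesis unfolding add_subfunctor_def by (simp add: A1 A2 A3 A4 A5 A6)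
qed

lemma IperpI: "g\<in>Hom X A Y \<Longrightarrow> (\<And>W C m d. W\<in>Obj X \<Longrightarrow> C\<in>Obj X \<Longrightarrow> m\<in>I W C \<Longrightarrow> d\<in>EE X C A
   \<Longrightarrow> pull X W C Y m (push X C A Y g d) = ezero X W Y) \<Longrightarrow> g\<in>Iperp X I A Y"
  unfolding Iperp_def by blast
lemma IperpD: "g\<in>Iperp X I A Y \<Longrightarrow> W\<in>Obj X \<Longrightarrow> C\<in>Obj X \<Longrightarrow> m\<in>I W C \<Longrightarrow> d\<in>EE X C A
   \<Longrightarrow> pull X W C Y m (push X C A Y g d) = ezero X W Y"
  unfolding Iperp_def by blast
lemma IperpH: "g\<in>Iperp X I A Y \<Longrightarrow> g\<in>Hom X A Y"
  unfolding Iperp_def by blast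

lemma ObK_perp: "A\<in>ObK X (Iperp X I) \<Longrightarrow> W\<in>Obj X \<Longrightarrow> C\<in>Obj X \<Longrightarrow> m\<in>I W C \<Longrightarrow> d\<in>EE X C A
   \<Longrightarrow> pull X W C A m d = ezero X W A"
  unfolding ObK_def using IperpD[of "idm X A" A A W C m d] by simp

lemma ObK_perpI: "A\<in>Obj X \<Longrightarrow> (\<And>W C m d. W\<in>Obj X \<Longrightarrow> C\<in>Obj X \<Longrightarrow> m\<in>I W C \<Longrightarrow> d\<in>EE X C A
   \<Longrightarrow> pull X W C A m d = ezero X W A) \<Longrightarrow> A\<in>ObK X (Iperp X I)"
  unfolding ObK_def by (auto intro!: IperpI)

lemma Iperp_ideal: "ideal X (Iperp X I)"
proof -
  have B1: "\<And>A B. A\<in>Obj X \<Longrightarrow> B\<in>Obj X \<Longrightarrow> Iperp X I A B \<subseteq> Hom X A B" using IperpH by blast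
  have B2: "\<And>A B. A\<in>Obj X \<Longrightarrow> B\<in>Obj X \<Longrightarrow> mzero X A B \<in> Iperp X I A B"
    by (rule IperpI) (simp_all add: idl_hom)
  have B3: "\<And>A B f g. A\<in>Obj X \<Longrightarrow> B\<in>Obj X \<Longrightarrow> f\<in>Iperp X I A B \<Longrightarrow> g\<in>Iperp X I A B \<Longrightarrow> madd X A B f g \<in> Iperp X I A B"
  proof -
    fix A B f g assume o: "A\<in>Obj X" "B\<in>Obj X" and fg: "f\<in>Iperp X I A B" "g\<in>Iperp X I A B"
    have h: "f\<in>Hom X A B" "g\<in>Hom X A B" using fg IperpH by auto
    show "madd X A B f g \<in> Iperp X I A B"
    proof (rule IperpI)
      show "madd X A B f g \<in> Hom X A B" using o h by simp
      fix W C m d assume w: "W\<in>Obj X" "C\<in>Obj X" "m\<in>I W C" "d\<in>EE X C A"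
      have mh: "m\<in>Hom X W C" using w idl_hom by auto
      have "pull X W C B m (push X C A B (madd X A B f g) d)
         = pull X W C B m (eadd X C B (push X C A B f d) (push X C A B g d))" using push_madd o h w by simp
      also have "\<dots> = eadd X W B (pull X W C B m (push X C A B f d)) (pull X W C B m (push X C A B g d))"
        by (rule pull_eadd) (simp_all add: o h w mh)
      also have "\<dots> = ezero X W B" using IperpD[OF fg(1) w] IperpD[OF fg(2) w] o w by simp
      finally show "pull X W C B m (push X C A B (madd X A B f g) d) = ezero X W B" .
    qed
  qed
  have B4: "\<And>W A B Z f u v. W\<in>Obj X \<Longrightarrow> A\<in>Obj X \<Longrightarrow> B\<in>Obj X \<Longrightarrow> Z\<in>Obj X \<Longrightarrow> f\<in>Iperp X I A B
      \<Longrightarrow> u\<in>Hom X W A \<Longrightarrow> v\<in>Hom X B Z \<Longrightarrow> cmp X W B Z v (cmp X W A B f u) \<in> Iperp X I W Z"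
  proof -
    fix W A B Z f u v assume o: "W\<in>Obj X" "A\<in>Obj X" "B\<in>Obj X" "Z\<in>Obj X" and f: "f\<in>Iperp X I A B"
      and uv: "u\<in>Hom X W A" "v\<in>Hom X B Z"
    have h: "f\<in>Hom X A B" using f IperpH by auto
    show "cmp X W B Z v (cmp X W A B f u) \<in> Iperp X I W Z"
    proof (rule IperpI)
      show "cmp X W B Z v (cmp X W A B f u) \<in> Hom X W Z" using o h uv by simp
      fix W' C m d assume w: "W'\<in>Obj X" "C\<in>Obj X" "m\<in>I W' C" "d\<in>EE X C W"
      have mh: "m\<in>Hom X W' C" using w idl_hom by auto
      have "push X C W Z (cmp X W B Z v (cmp X W A B f u)) d = push X C B Z v (push X C W B (cmp X W A B f u) d)"
        by (rule push_cmp) (simp_all add: o h uv w)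
      also have "push X C W B (cmp X W A B f u) d = push X C A B f (push X C W A u d)"
        by (rule push_cmp) (simp_all add: o h uv w)
      finally have e: "push X C W Z (cmp X W B Z v (cmp X W A B f u)) d = push X C B Z v (push X C A B f (push X C W A u d))" .
      have "pull X W' C Z m (push X C B Z v (push X C A B f (push X C W A u d)))
          = push X W' B Z v (pull X W' C B m (push X C A B f (push X C W A u d)))"
        by (rule push_pull[symmetric]) (simp_all add: o h uv w mh)
      also have "\<dots> = ezero X W' Z" using IperpD[OF f w(1) w(2) w(3), of "push X C W A u d"] o uv w by simp
      finally show "pull X W' C Z m (push X C W Z (cmp X W B Z v (cmp X W A B f u)) d) = ezero X W' Z" using e by simp
    qed
  qed
  show ?thesis unfolding ideal_def by (simp add: B1 B2 B3 B4)
qed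


definition "K0 = (\<lambda>P Q. if P = Q \<and> P \<in> ObK X (Iperp X I) then {idm X P} else {})"
definition "Jfac A B = {f\<in>Hom X A B. \<exists>K\<in>ObK X (Iperp X I). \<exists>u\<in>Hom X A K. \<exists>v\<in>Hom X K B. f = cmp X A K B v u}"

lemma ObK_obj: "K\<in>ObK X (Iperp X I) \<Longrightarrow> K\<in>Obj X" unfolding ObK_def by blast

lemma gen_sub: "ideal X J \<Longrightarrow> (\<And>P Q. P\<in>Obj X \<Longrightarrow> Q\<in>Obj X \<Longrightarrow> K P Q \<subseteq> J P Q) \<Longrightarrow> f \<in> gen_ideal X K A B \<Longrightarrow> f \<in> J A B"
  unfolding gen_ideal_def by blast

lemma gen_fac: assumes o: "A\<in>Obj X" "B\<in>Obj X" and K: "K\<in>ObK X (Iperp X I)" and u: "u\<in>Hom X A K" and v: "v\<in>Hom X K B"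
  shows "cmp X A K B v u \<in> gen_ideal X K0 A B"
  unfolding gen_ideal_def
proof (intro CollectI allI impI)
  fix J assume J: "ideal X J \<and> (\<forall>P\<in>Obj X. \<forall>Q\<in>Obj X. K0 P Q \<subseteq> J P Q)"
  have Ko: "K\<in>Obj X" using K ObK_obj by blast
  have "K0 K K \<subseteq> J K K" using J Ko by blast
  moreover have "K0 K K = {idm X K}" unfolding K0_def using K by simp
  ultimately have "idm X K \<in> J K K" by blast
  hence "cmp X A K B v (cmp X A K K (idm X K) u) \<in> J A B"
    using J[THEN conjunct1, unfolded ideal_def, THEN conjunct2] o Ko u v by blast
  thus "cmp X A K B v u \<in> J A B" using o Ko u by simp
qed

lemma ObK_biprod: assumes bp: "is_biprod X K1 K2 P i1 i2 p1 p2" and K: "K1\<in>ObK X (Iperp X I)" "K2\<in>ObK X (Iperp X I)"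
  shows "P\<in>ObK X (Iperp X I)"
proof -
  note b = biprodD[OF bp]
  have o: "K1\<in>Obj X" "K2\<in>Obj X" using K ObK_obj by auto
  have i1: "idm X K1 \<in> Iperp X I K1 K1" "idm X K2 \<in> Iperp X I K2 K2" using K unfolding ObK_def by auto
  have "cmp X P K1 P i1 (cmp X P K1 K1 (idm X K1) p1) \<in> Iperp X I P P"
    using Iperp_ideal[unfolded ideal_def, THEN conjunct2] i1 o b by blast
  hence a: "cmp X P K1 P i1 p1 \<in> Iperp X I P P" using o b by simp
  have "cmp X P K2 P i2 (cmp X P K2 K2 (idm X K2) p2) \<in> Iperp X I P P"
    using Iperp_ideal[unfolded ideal_def, THEN conjunct2] i1 o b by blast
  hence c: "cmp X P K2 P i2 p2 \<in> Iperp X I P P" using o b by simp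
  have "madd X P P (cmp X P K1 P i1 p1) (cmp X P K2 P i2 p2) \<in> Iperp X I P P"
    using Iperp_ideal[unfolded ideal_def, THEN conjunct1] a c b by blast
  thus ?thesis using b unfolding ObK_def by simp
qed

lemma Jfac_ideal: "ideal X Jfac"
proof -
  have C1: "\<And>A B. A\<in>Obj X \<Longrightarrow> B\<in>Obj X \<Longrightarrow> Jfac A B \<subseteq> Hom X A B" unfolding Jfac_def by blast
  have C2: "\<And>A B. A\<in>Obj X \<Longrightarrow> B\<in>Obj X \<Longrightarrow> mzero X A B \<in> Jfac A B"
  proof -
    fix A B assume o: "A\<in>Obj X" "B\<in>Obj X"
    obtain Z where Z: "Z\<in>Obj X" "\<forall>A\<in>Obj X. Hom X A Z = {mzero X A Z} \<and> Hom X Z A = {mzero X Z A}" using zobj by blast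
    have "idm X Z = mzero X Z Z" using Z id_hom[OF Z(1)] by auto
    hence "Z\<in>ObK X (Iperp X I)" unfolding ObK_def using Z Iperp_ideal[unfolded ideal_def] by auto
    moreover have "mzero X A B = cmp X A Z B (mzero X Z B) (mzero X A Z)" using o Z by simp
    ultimately show "mzero X A B \<in> Jfac A B" unfolding Jfac_def using o Z by fastforce
  qed
  have C3: "\<And>A B f g. A\<in>Obj X \<Longrightarrow> B\<in>Obj X \<Longrightarrow> f\<in>Jfac A B \<Longrightarrow> g\<in>Jfac A B \<Longrightarrow> madd X A B f g \<in> Jfac A B"
  proof -
    fix A B f g assume o: "A\<in>Obj X" "B\<in>Obj X" and fg: "f\<in>Jfac A B" "g\<in>Jfac A B"
    obtain K u v where K: "K\<in>ObK X (Iperp X I)" "u\<in>Hom X A K" "v\<in>Hom X K B" "f = cmp X A K B v u" using fg(1) unfolding Jfac_def by blast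
    obtain K' u' v' where K': "K'\<in>ObK X (Iperp X I)" "u'\<in>Hom X A K'" "v'\<in>Hom X K' B" "g = cmp X A K' B v' u'" using fg(2) unfolding Jfac_def by blast
    have ok: "K\<in>Obj X" "K'\<in>Obj X" using K K' ObK_obj by auto
    obtain P i1 i2 p1 p2 where bp: "is_biprod X K K' P i1 i2 p1 p2" using biprod_ex ok by blast
    note b = biprodD[OF bp]
    have PK: "P\<in>ObK X (Iperp X I)" using ObK_biprod[OF bp K(1) K'(1)] .
    define U where "U = madd X A P (cmp X A K P i1 u) (cmp X A K' P i2 u')"
    define V where "V = madd X P B (cmp X P K B v p1) (cmp X P K' B v' p2)"
    have UH: "U\<in>Hom X A P" unfolding U_def using o ok b K K' by simp
    have VH: "V\<in>Hom X P B" unfolding V_def using o ok b K K' by simp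
    have V1: "cmp X K P B V i1 = v"
    proof -
      have "cmp X K P B V i1 = madd X K B (cmp X K P B (cmp X P K B v p1) i1) (cmp X K P B (cmp X P K' B v' p2) i1)"
        unfolding V_def by (rule dist_l) (simp_all add: o ok b K K')
      also have "cmp X K P B (cmp X P K B v p1) i1 = cmp X K K B v (cmp X K P K p1 i1)"
        by (rule assoc[symmetric]) (simp_all add: o ok b K K')
      also have "cmp X K P B (cmp X P K' B v' p2) i1 = cmp X K K' B v' (cmp X K P K' p2 i1)"
        by (rule assoc[symmetric]) (simp_all add: o ok b K K')
      finally show ?thesis using o ok b K K' by simp
    qed
    have V2: "cmp X K' P B V i2 = v'"
    proof -
      have "cmp X K' P B V i2 = madd X K' B (cmp X K' P B (cmp X P K B v p1) i2) (cmp X K' P B (cmp X P K' B v' p2) i2)"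
        unfolding V_def by (rule dist_l) (simp_all add: o ok b K K')
      also have "cmp X K' P B (cmp X P K B v p1) i2 = cmp X K' K B v (cmp X K' P K p1 i2)"
        by (rule assoc[symmetric]) (simp_all add: o ok b K K')
      also have "cmp X K' P B (cmp X P K' B v' p2) i2 = cmp X K' K' B v' (cmp X K' P K' p2 i2)"
        by (rule assoc[symmetric]) (simp_all add: o ok b K K')
      finally show ?thesis using o ok b K K' by simp
    qed
    have "cmp X A P B V U = madd X A B (cmp X A P B V (cmp X A K P i1 u)) (cmp X A P B V (cmp X A K' P i2 u'))"
      unfolding U_def by (rule dist_r) (simp_all add: o ok b K K' VH)
    also have "cmp X A P B V (cmp X A K P i1 u) = cmp X A K B (cmp X K P B V i1) u"
      by (rule assoc) (simp_all add: o ok b K K' VH)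
    also have "cmp X A P B V (cmp X A K' P i2 u') = cmp X A K' B (cmp X K' P B V i2) u'"
      by (rule assoc) (simp_all add: o ok b K K' VH)
    finally have "cmp X A P B V U = madd X A B f g" using V1 V2 K K' by simp
    hence "madd X A B f g = cmp X A P B V U" by simp
    moreover have "madd X A B f g \<in> Hom X A B" using o ok K K' by simp
    ultimately show "madd X A B f g \<in> Jfac A B" unfolding Jfac_def using PK UH VH by blast
  qed
  have C4: "\<And>W A B Z f u v. W\<in>Obj X \<Longrightarrow> A\<in>Obj X \<Longrightarrow> B\<in>Obj X \<Longrightarrow> Z\<in>Obj X \<Longrightarrow> f\<in>Jfac A B
      \<Longrightarrow> u\<in>Hom X W A \<Longrightarrow> v\<in>Hom X B Z \<Longrightarrow> cmp X W B Z v (cmp X W A B f u) \<in> Jfac W Z"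
  proof -
    fix W A B Z f u2 v2 assume o: "W\<in>Obj X" "A\<in>Obj X" "B\<in>Obj X" "Z\<in>Obj X" and f: "f\<in>Jfac A B"
      and uv: "u2\<in>Hom X W A" "v2\<in>Hom X B Z"
    obtain K u v where K: "K\<in>ObK X (Iperp X I)" "u\<in>Hom X A K" "v\<in>Hom X K B" "f = cmp X A K B v u" using f unfolding Jfac_def by blast
    have ok: "K\<in>Obj X" using K ObK_obj by auto
    have "cmp X W B Z v2 (cmp X W A B (cmp X A K B v u) u2) = cmp X W B Z v2 (cmp X W K B v (cmp X W A K u u2))"
      using assoc[of W A K B u2 u v] o ok K uv by simp
    also have "\<dots> = cmp X W K Z (cmp X K B Z v2 v) (cmp X W A K u u2)"
      by (rule assoc) (simp_all add: o ok K uv)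
    finally have e: "cmp X W B Z v2 (cmp X W A B f u2) = cmp X W K Z (cmp X K B Z v2 v) (cmp X W A K u u2)" using K by simp
    moreover have "cmp X W A K u u2 \<in> Hom X W K" "cmp X K B Z v2 v \<in> Hom X K Z" using o ok K uv by simp_all
    moreover have "cmp X W B Z v2 (cmp X W A B f u2) \<in> Hom X W Z" using o ok K uv Jfac_def f by auto
    ultimately show "cmp X W B Z v2 (cmp X W A B f u2) \<in> Jfac W Z" unfolding Jfac_def using K(1) by blast
  qed
  show ?thesis unfolding ideal_def by (simp add: C1 C2 C3 C4)
qed


lemma K0_sub_Jfac: "P\<in>Obj X \<Longrightarrow> Q\<in>Obj X \<Longrightarrow> K0 P Q \<subseteq> Jfac P Q"
proof
  fix f assume o: "P\<in>Obj X" "Q\<in>Obj X" and f: "f\<in>K0 P Q"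
  hence PQ: "P = Q" "P\<in>ObK X (Iperp X I)" "f = idm X P" unfolding K0_def by (auto split: if_splits)
  have "idm X P = cmp X P P P (idm X P) (idm X P)" using o by simp
  thus "f\<in>Jfac P Q" unfolding Jfac_def using PQ o by fastforce
qed

lemma K0_sub_Iperp: "P\<in>Obj X \<Longrightarrow> Q\<in>Obj X \<Longrightarrow> K0 P Q \<subseteq> Iperp X I P Q"
  unfolding K0_def ObK_def by auto

lemma objideal_iff: "object_ideal X (Iperp X I) \<longleftrightarrow> (\<forall>A\<in>Obj X. \<forall>B\<in>Obj X. Iperp X I A B = gen_ideal X K0 A B)"
  unfolding object_ideal_def K0_def by simp

section \<open>Part IV: (d) implies (b)\<close>

lemma d_to_b: assumes "cond_d X I" shows "cond_b X I"
proof -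
  have sp: "special_precovering X I" and oi: "object_ideal X (Iperp X I)" using assms unfolding cond_d_def by auto
  show ?thesis unfolding cond_b_def obj_special_precovering_def
  proof
    fix C assume C: "C\<in>Obj X"
    obtain W i where "special_precover X I C W i" using sp C unfolding special_precovering_def by blast
    then obtain A B x y d A' x' d' j b where iI: "i\<in>I W C" and r1: "rlz X C A d B x y" and r2: "rlz X C A' d' W x' i"
      and m: "etri_mor X C A d B x y C A' d' W x' i j b (idm X C)" and j: "j\<in>Iperp X I A A'"
      unfolding special_precover_def by blast
    from rlzD[OF r1] rlzD[OF r2] have o: "A\<in>Obj X" "A'\<in>Obj X" "W\<in>Obj X" "d\<in>EE X C A" "d'\<in>EE X C A'" "i\<in>Hom X W C" by auto
    have "j\<in>gen_ideal X K0 A A'" using j oi o unfolding objideal_iff by blast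
    hence "j\<in>Jfac A A'" using gen_sub[OF Jfac_ideal K0_sub_Jfac] by blast
    then obtain K u v where K: "K\<in>ObK X (Iperp X I)" "u\<in>Hom X A K" "v\<in>Hom X K A'" "j = cmp X A K A' v u"
      unfolding Jfac_def by blast
    have Ko: "K\<in>Obj X" using K ObK_obj by blast
    obtain B'' w y'' where r3: "rlz X C K (push X C A K u d) B'' w y''" using rlz_ex[of C K "push X C A K u d"] C Ko o K by auto
    from rlzD[OF r3] have o3: "B''\<in>Obj X" by auto
    have "push X C K A' v (push X C A K u d) = push X C A A' j d" using push_cmp[of C A K A' u v d] C o Ko K by simp
    also have "\<dots> = pull X C C A' (idm X C) d'" using etri_morD[OF m] by simp
    finally obtain b'' where "etri_mor X C K (push X C A K u d) B'' w y'' C A' d' W x' i v b'' (idm X C)"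
      using rlz_mor[OF r3 r2 K(3) id_hom[OF C]] by blast
    hence b'': "b''\<in>Hom X B'' W" "cmp X B'' C C (idm X C) y'' = cmp X B'' W C i b''" using etri_morD by auto
    have yH: "y''\<in>Hom X B'' C" using rlzD[OF r3] by auto
    have "y'' = cmp X B'' W C i b''" using b'' yH C o3 by simp
    hence "y''\<in>I B'' C" using idl_r[OF o3 o(3) C iI b''(1)] by simp
    hence "obj_special_precover X I C B'' y''" unfolding obj_special_precover_def using r3 K(1) by blast
    thus "\<exists>W i. obj_special_precover X I C W i" by blast
  qed
qed

section \<open>Part V and easy implications\<close>

lemma c_to_a': "cond_c X I \<Longrightarrow> cond_a' X I"
  unfolding cond_c_def cond_a'_def using Istar_subfunctor by blast

lemma spec_inj_inj: assumes "F_enough_special_inj X F" shows "F_enough_inj X F"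
  unfolding F_enough_inj_def
proof
  fix A assume "A\<in>Obj X"
  then obtain B e C y d where "rlz X C A d B e y" "d \<in> F C A" "F_injective X F B"
    using assms unfolding F_enough_special_inj_def by blast
  thus "\<exists>B e C y d. rlz X C A d B e y \<and> d \<in> F C A \<and> F_injective X F B" by blast
qed

lemma a'_to_a: "cond_a' X I \<Longrightarrow> cond_a X I"
  unfolding cond_a'_def cond_a_def using spec_inj_inj by blast

lemma b_to_special: "cond_b X I \<Longrightarrow> special_precovering X I"
  unfolding cond_b_def obj_special_precovering_def special_precovering_def
proof
  fix C assume C: "C\<in>Obj X" and h: "\<forall>C\<in>Obj X. \<exists>W i. obj_special_precover X I C W i"
  then obtain W i A x d where iI: "i\<in>I W C" and r: "rlz X C A d W x i" and A: "A\<in>ObK X (Iperp X I)"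
    unfolding obj_special_precover_def by blast
  from rlzD[OF r] have o: "A\<in>Obj X" "W\<in>Obj X" "d\<in>EE X C A" "x\<in>Hom X A W" "i\<in>Hom X W C" by auto
  have m: "etri_mor X C A d W x i C A d W x i (idm X A) (idm X W) (idm X C)"
    unfolding etri_mor_def using o C by simp
  have "idm X A \<in> Iperp X I A A" using A unfolding ObK_def by blast
  hence "special_precover X I C W i" unfolding special_precover_def using iI r m by blast
  thus "\<exists>W i. special_precover X I C W i" by blast
qed


section \<open>Part I\<close>

lemma Fsub: "add_subfunctor X F \<Longrightarrow> C\<in>Obj X \<Longrightarrow> A\<in>Obj X \<Longrightarrow> d\<in>F C A \<Longrightarrow> d\<in>EE X C A"
  unfolding add_subfunctor_def by blast
lemma Fpush: "add_subfunctor X F \<Longrightarrow> C\<in>Obj X \<Longrightarrow> A\<in>Obj X \<Longrightarrow> A'\<in>Obj X \<Longrightarrow> a\<in>Hom X A A' \<Longrightarrow> d\<in>F C A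
   \<Longrightarrow> push X C A A' a d \<in> F C A'"
  unfolding add_subfunctor_def by blast
lemma Fpull: "add_subfunctor X F \<Longrightarrow> C'\<in>Obj X \<Longrightarrow> C\<in>Obj X \<Longrightarrow> A\<in>Obj X \<Longrightarrow> c\<in>Hom X C' C \<Longrightarrow> d\<in>F C A
   \<Longrightarrow> pull X C' C A c d \<in> F C' A"
  unfolding add_subfunctor_def by blast
lemma Finj_zero: assumes "F_injective X F B" "C\<in>Obj X" "d\<in>F C B" "d\<in>EE X C B" shows "d = ezero X C B"
proof -
  have "B\<in>Obj X" using assms unfolding F_injective_def by blast
  moreover have "push X C B B (idm X B) d = ezero X C B"
    using assms unfolding F_injective_def Finj_def by blast
  ultimately show ?thesis using assms by simp
qed

lemma a_to_b_core: assumes proj: "enough_proj_morphisms X" and F: "add_subfunctor X F"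
  and ei: "F_enough_inj X F" and IP: "\<forall>A\<in>Obj X. \<forall>B\<in>Obj X. I A B = Ph X F A B"
  shows "cond_b X I"
  unfolding cond_b_def obj_special_precovering_def
proof
  fix C assume C: "C\<in>Obj X"
  obtain K P k p g where rg: "rlz X C K g P k p" and pz: "\<forall>A\<in>Obj X. \<forall>d\<in>EE X C A. pull X P C A p d = ezero X P A"
    using proj C unfolding enough_proj_morphisms_def by blast
  from rlzD[OF rg] have oK: "K\<in>Obj X" "P\<in>Obj X" "g\<in>EE X C K" "p\<in>Hom X P C" by auto
  obtain B0 e Z y dl where rd: "rlz X Z K dl B0 e y" and dF: "dl\<in>F Z K" and B0i: "F_injective X F B0"
    using ei oK unfolding F_enough_inj_def by blast
  from rlzD[OF rd] have oB: "B0\<in>Obj X" "Z\<in>Obj X" "e\<in>Hom X K B0" "dl\<in>EE X Z K" by auto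
  obtain W w i where rW: "rlz X C B0 (push X C K B0 e g) W w i" using rlz_ex[of C B0 "push X C K B0 e g"] C oB oK by auto
  from rlzD[OF rW] have oW: "W\<in>Obj X" "i\<in>Hom X W C" by auto
  have iPh: "i\<in>Ph X F W C" unfolding Ph_def
  proof (intro CollectI conjI ballI)
    show "i\<in>Hom X W C" by (rule oW(2))
    fix A th assume A: "A\<in>Obj X" and th: "th\<in>EE X C A"
    obtain B' e' Z' y' dA where rA: "rlz X Z' A dA B' e' y'" and dAF: "dA\<in>F Z' A" and B'i: "F_injective X F B'"
      using ei A unfolding F_enough_inj_def by blast
    from rlzD[OF rA] have oA: "B'\<in>Obj X" "Z'\<in>Obj X" "e'\<in>Hom X A B'" by auto
    define eta where "eta = push X C A B' e' th"
    have eta: "eta\<in>EE X C B'" unfolding eta_def using C A oA th by simp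
    have "pull X P C B' p eta = ezero X P B'" using pz oA eta by blast
    then obtain v where v: "v\<in>Hom X K B'" "eta = push X C K B' v g" using tri_ext_push[OF rg oA(1) eta] by blast
    have "push X Z K B' v dl \<in> F Z B'" using Fpush[OF F] oB oK oA v dF by simp
    hence "push X Z K B' v dl = ezero X Z B'" using Finj_zero[OF B'i] oB oK oA v by simp
    then obtain u where u: "u\<in>Hom X B0 B'" "v = cmp X K B0 B' u e" using tri_fac_infl_ext[OF rd oA(1) v(1)] by blast
    have "eta = push X C B0 B' u (push X C K B0 e g)" using v u push_cmp[of C K B0 B' e u g] C oK oB oA by simp
    hence "pull X W C B' i eta = push X W B0 B' u (pull X W C B0 i (push X C K B0 e g))"
      using push_pull[of W C B0 B' i u "push X C K B0 e g"] C oK oB oA oW u by simp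
    also have "\<dots> = ezero X W B'" using tri_pull_self[OF rW] oW oB oA u by simp
    finally have "push X W A B' e' (pull X W C A i th) = ezero X W B'"
      unfolding eta_def using push_pull[of W C A B' i e' th] C A oA oW th by simp
    moreover have "pull X W C A i th \<in> EE X W A" using C A oW th by simp
    ultimately obtain g' where g': "g'\<in>Hom X W Z'" "pull X W C A i th = pull X W Z' A g' dA"
      using tri_ext_pull[OF rA oW(1)] by blast
    show "pull X W C A i th \<in> F W A" using g' Fpull[OF F] oW oA A dAF by simp
  qed
  hence iI: "i\<in>I W C" using IP C oW by simp
  have B0K: "B0\<in>ObK X (Iperp X I)"
  proof (rule ObK_perpI[OF oB(1)])
    fix W' C'' m d assume w: "W'\<in>Obj X" "C''\<in>Obj X" "m\<in>I W' C''" "d\<in>EE X C'' B0"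
    have "m\<in>Ph X F W' C''" using w IP by simp
    hence "pull X W' C'' B0 m d \<in> F W' B0" using w oB unfolding Ph_def by blast
    moreover have "m\<in>Hom X W' C''" using w idl_hom by simp
    ultimately show "pull X W' C'' B0 m d = ezero X W' B0" using Finj_zero[OF B0i] w oB by simp
  qed
  have "obj_special_precover X I C W i" unfolding obj_special_precover_def using iI rW B0K by blast
  thus "\<exists>W i. obj_special_precover X I C W i" by blast
qed

lemma a_to_b: "enough_proj_morphisms X \<Longrightarrow> cond_a X I \<Longrightarrow> cond_b X I"
  unfolding cond_a_def using a_to_b_core by blast


section \<open>Part III\<close>

lemma c_objideal: assumes c: "cond_c X I" shows "object_ideal X (Iperp X I)"
  unfolding objideal_iff
proof (intro ballI equalityI subsetI)
  fix A B f assume o: "A\<in>Obj X" "B\<in>Obj X"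
  { assume "f\<in>gen_ideal X K0 A B"
    thus "f\<in>Iperp X I A B" using gen_sub[OF Iperp_ideal K0_sub_Iperp] by blast }
  assume g: "f\<in>Iperp X I A B"
  have si: "F_enough_special_inj X (Istar X I)" and IP: "\<forall>A\<in>Obj X. \<forall>B\<in>Obj X. I A B = Ph X (Istar X I) A B"
    using c unfolding cond_c_def by auto
  have "\<exists>B e C y d B' x' C' y' d' b ph.
        rlz X C A d B e y \<and> d \<in> Istar X I C A \<and> F_injective X (Istar X I) B
        \<and> rlz X C' A d' B' x' y'
        \<and> etri_mor X C A d B e y C' A d' B' x' y' (idm X A) b ph
        \<and> ph \<in> Ph X (Istar X I) C C'"
    using si unfolding F_enough_special_inj_def by (rule bspec[OF _ o(1)])
  then obtain B0 e Z0 y0 d0 B' x' C' y' d' b ph where r0: "rlz X Z0 A d0 B0 e y0" and "d0 \<in> Istar X I Z0 A"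
    and B0i: "F_injective X (Istar X I) B0"
    and r': "rlz X C' A d' B' x' y'" and m: "etri_mor X Z0 A d0 B0 e y0 C' A d' B' x' y' (idm X A) b ph"
    and ph: "ph\<in>Ph X (Istar X I) Z0 C'"
    by blast
  from rlzD[OF r0] rlzD[OF r'] have o0: "B0\<in>Obj X" "Z0\<in>Obj X" "C'\<in>Obj X" "d0\<in>EE X Z0 A" "d'\<in>EE X C' A" "e\<in>Hom X A B0" by auto
  have phI: "ph\<in>I Z0 C'" using ph IP o0 by simp
  have phH: "ph\<in>Hom X Z0 C'" using phI idl_hom o0 by auto
  have fH: "f\<in>Hom X A B" using g IperpH by blast
  have "d0 = pull X Z0 C' A ph d'" using etri_morD[OF m] o0 o by simp
  hence "push X Z0 A B f d0 = pull X Z0 C' B ph (push X C' A B f d')" using push_pull[of Z0 C' A B ph f d'] o0 o phH fH by simp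
  also have "\<dots> = ezero X Z0 B" using IperpD[OF g o0(2) o0(3) phI o0(5)] .
  finally obtain s where s: "s\<in>Hom X B0 B" "f = cmp X A B0 B s e" using tri_fac_infl_ext[OF r0 o(2) fH] by blast
  have B0K: "B0\<in>ObK X (Iperp X I)"
  proof (rule ObK_perpI[OF o0(1)])
    fix W C m d assume w: "W\<in>Obj X" "C\<in>Obj X" "m\<in>I W C" "d\<in>EE X C B0"
    have "pull X W C B0 m d \<in> Istar X I W B0" using IstarI w by simp
    moreover have "m\<in>Hom X W C" using w idl_hom by simp
    ultimately show "pull X W C B0 m d = ezero X W B0" using Finj_zero[OF B0i] w o0 by simp
  qed
  show "f\<in>gen_ideal X K0 A B" using gen_fac[OF o B0K o0(6) s(1)] s by simp
qed

lemma c_to_d: "enough_proj_morphisms X \<Longrightarrow> cond_c X I \<Longrightarrow> cond_d X I"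
  unfolding cond_d_def using c_objideal b_to_special a_to_b a'_to_a c_to_a' by blast


section \<open>Part II\<close>

lemma b_Ph: assumes b: "cond_b X I" and o: "W\<in>Obj X" "C\<in>Obj X" shows "I W C = Ph X (Istar X I) W C"
proof (intro equalityI subsetI)
  fix f assume f: "f\<in>I W C"
  show "f\<in>Ph X (Istar X I) W C" unfolding Ph_def using f idl_hom o IstarI by auto
next
  fix f assume f: "f\<in>Ph X (Istar X I) W C"
  hence fH: "f\<in>Hom X W C" unfolding Ph_def by blast
  obtain X0 i A0 x g where iI: "i\<in>I X0 C" and rg: "rlz X C A0 g X0 x i" and A0: "A0\<in>ObK X (Iperp X I)"
    using b o unfolding cond_b_def obj_special_precovering_def obj_special_precover_def by blast
  from rlzD[OF rg] have o0: "A0\<in>Obj X" "X0\<in>Obj X" "g\<in>EE X C A0" by auto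
  have "pull X W C A0 f g \<in> Istar X I W A0" using f o0 unfolding Ph_def by blast
  then obtain C'' m ep where m: "C''\<in>Obj X" "m\<in>I W C''" "ep\<in>EE X C'' A0" "pull X W C A0 f g = pull X W C'' A0 m ep"
    by (rule IstarE)
  have "pull X W C A0 f g = ezero X W A0" using m ObK_perp[OF A0 o(1) m(1) m(2) m(3)] by simp
  then obtain t where t: "t\<in>Hom X W X0" "f = cmp X W X0 C i t" using tri_fac_defl[OF rg o(1) fH] by blast
  show "f\<in>I W C" using t idl_r[OF o(1) o0(2) o(2) iI t(1)] by simp
qed

lemma b_to_c: assumes ei: "enough_inj_objects X" and bb: "cond_b X I" shows "cond_c X I"
  unfolding cond_c_def
proof (intro conjI)
  show "\<forall>A\<in>Obj X. \<forall>B\<in>Obj X. I A B = Ph X (Istar X I) A B" using b_Ph[OF bb] by blast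
  show "F_enough_special_inj X (Istar X I)" unfolding F_enough_special_inj_def
  proof
    fix A assume A: "A\<in>Obj X"
    obtain E e C' y' d' where rd': "rlz X C' A d' E e y'" and Einj: "\<forall>Z\<in>Obj X. EE X Z E = {ezero X Z E}"
      using ei A unfolding enough_inj_objects_def by blast
    from rlzD[OF rd'] have oE: "E\<in>Obj X" "C'\<in>Obj X" "d'\<in>EE X C' A" "e\<in>Hom X A E" "y'\<in>Hom X E C'" by auto
    obtain X0 i K k0 g where iI: "i\<in>I X0 C'" and rg: "rlz X C' K g X0 k0 i" and KK: "K\<in>ObK X (Iperp X I)"
      using bb oE unfolding cond_b_def obj_special_precovering_def obj_special_precover_def by blast
    from rlzD[OF rg] have oK: "K\<in>Obj X" "X0\<in>Obj X" "g\<in>EE X C' K" "i\<in>Hom X X0 C'" by auto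
    define z0 where "z0 = pull X E C' K y' g"
    have z0: "z0\<in>EE X E K" unfolding z0_def using oE oK by simp
    obtain B k b where rB: "rlz X E K z0 B k b" using rlz_ex[OF oE(1) oK(1) z0] by blast
    from rlzD[OF rB] have oB: "B\<in>Obj X" "k\<in>Hom X K B" "b\<in>Hom X B E" by auto
    obtain E0 h' dd ee d'' where E0: "E0\<in>Obj X" "dd\<in>Hom X K E0" "ee\<in>Hom X E0 A"
      "rlz X C' E0 d'' B h' (cmp X B E C' y' b)" "cmp X E0 B E b h' = cmp X E0 A E e ee"
      "rlz X A K (pull X A E K e z0) E0 dd ee" "d' = push X C' E0 A ee d''"
      "push X E K E0 dd z0 = pull X E C' E0 y' d''"
      by (rule ET4opE[OF rB rd']) blast
    from rlzD[OF E0(4)] have oh: "d''\<in>EE X C' E0" "h'\<in>Hom X E0 B" by auto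
    have "pull X A E K e z0 = pull X A C' K (cmp X A E C' y' e) g"
      unfolding z0_def using pull_cmp[of A E C' K e y' g] A oE oK by simp
    also have "\<dots> = ezero X A K" using tri_comp_zero[OF rd'] A oE oK by simp
    finally have rsp: "rlz X A K (ezero X A K) E0 dd ee" using E0(6) by simp
    obtain r0 where r0: "r0\<in>Hom X E0 K" "idm X K = cmp X K E0 K r0 dd"
      using tri_fac_infl_ext[OF rsp oK(1) id_hom[OF oK(1)]] oK A by auto
    obtain n where n: "n\<in>Hom X E0 K" "madd X E0 K r0 n = mzero X E0 K" using madd_inv[OF E0(1) oK(1) r0(1)] by blast
    define eta where "eta = eadd X C' K g (push X C' E0 K n d'')"
    have eta: "eta\<in>EE X C' K" unfolding eta_def using oE oK E0 oh n by simp
    have nd: "madd X K K (idm X K) (cmp X K E0 K n dd) = mzero X K K"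
    proof -
      have "cmp X K E0 K (madd X E0 K r0 n) dd = madd X K K (cmp X K E0 K r0 dd) (cmp X K E0 K n dd)"
        by (rule dist_l) (simp_all add: oK E0 r0 n)
      thus ?thesis using n r0 oK E0 by simp
    qed
    have ndz: "eadd X E K z0 (push X E K K (cmp X K E0 K n dd) z0) = ezero X E K"
    proof -
      have "push X E K K (madd X K K (idm X K) (cmp X K E0 K n dd)) z0
          = eadd X E K (push X E K K (idm X K) z0) (push X E K K (cmp X K E0 K n dd) z0)"
        by (rule push_madd) (simp_all add: oK E0 n z0 oE)
      thus ?thesis using nd z0 oE oK by simp
    qed
    have "pull X E C' K y' eta = eadd X E K (pull X E C' K y' g) (pull X E C' K y' (push X C' E0 K n d''))"
      unfolding eta_def by (rule pull_eadd) (simp_all add: oE oK E0 n oh)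
    also have "pull X E C' K y' (push X C' E0 K n d'') = push X E E0 K n (pull X E C' E0 y' d'')"
      by (rule push_pull[symmetric]) (simp_all add: oE oK E0 n oh)
    also have "\<dots> = push X E E0 K n (push X E K E0 dd z0)" using E0(8) by simp
    also have "\<dots> = push X E K K (cmp X K E0 K n dd) z0"
      by (rule push_cmp[symmetric]) (simp_all add: oE oK E0 n z0)
    finally have "pull X E C' K y' eta = ezero X E K" using ndz unfolding z0_def by simp
    then obtain v where v: "v\<in>Hom X A K" "eta = push X C' A K v d'" using tri_ext_push[OF rd' oK(1) eta] by blast
    define t where "t = madd X E0 K r0 (cmp X E0 A K v ee)"
    have tH: "t\<in>Hom X E0 K" unfolding t_def using r0 v E0 A oK by simp
    have td: "cmp X K E0 K t dd = idm X K"
    proof -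
      have "cmp X K E0 K t dd = madd X K K (cmp X K E0 K r0 dd) (cmp X K E0 K (cmp X E0 A K v ee) dd)"
        unfolding t_def by (rule dist_l) (simp_all add: oK E0 r0 v A)
      also have "cmp X K E0 K (cmp X E0 A K v ee) dd = cmp X K A K v (cmp X K E0 A ee dd)"
        by (rule assoc[symmetric]) (simp_all add: oK E0 v A)
      finally show ?thesis using tri_comp_zero[OF rsp] r0(1) r0(2)[symmetric] oK A v E0 by simp
    qed
    have tdg: "push X C' E0 K t d'' = g"
    proof -
      have "push X C' E0 K t d'' = eadd X C' K (push X C' E0 K r0 d'') (push X C' E0 K (cmp X E0 A K v ee) d'')"
        unfolding t_def by (rule push_madd) (simp_all add: oK E0 r0 v A oE oh)
      also have "push X C' E0 K (cmp X E0 A K v ee) d'' = push X C' A K v (push X C' E0 A ee d'')"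
        by (rule push_cmp) (simp_all add: oK E0 v A oE oh)
      also have "\<dots> = eta" using v E0(7) by simp
      finally have 1: "push X C' E0 K t d'' = eadd X C' K (push X C' E0 K r0 d'') (eadd X C' K g (push X C' E0 K n d''))"
        unfolding eta_def .
      have m1: "push X C' E0 K r0 d''\<in>EE X C' K" "push X C' E0 K n d''\<in>EE X C' K" using oK E0 oE oh r0 n by simp_all
      have "eadd X C' K (push X C' E0 K r0 d'') (eadd X C' K g (push X C' E0 K n d''))
          = eadd X C' K (eadd X C' K (push X C' E0 K r0 d'') g) (push X C' E0 K n d'')"
        using eadd_assoc m1 oK oE by simp
      also have "\<dots> = eadd X C' K (eadd X C' K g (push X C' E0 K r0 d'')) (push X C' E0 K n d'')"
        using eadd_comm[of C' K g "push X C' E0 K r0 d''"] m1 oK oE by simp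
      also have "\<dots> = eadd X C' K g (eadd X C' K (push X C' E0 K r0 d'') (push X C' E0 K n d''))"
        using eadd_assoc m1 oK oE by simp
      also have "eadd X C' K (push X C' E0 K r0 d'') (push X C' E0 K n d'') = push X C' E0 K (madd X E0 K r0 n) d''"
        by (rule push_madd[symmetric]) (simp_all add: oK E0 r0 n oE oh)
      finally show ?thesis using 1 n oK oE E0 oh by simp
    qed
    obtain s where bp: "is_biprod X A K E0 s dd ee t" using split_biprod[OF rsp tH td] by blast
    note bpd = biprodD[OF bp]
    have rs: "rlz X K A (ezero X K A) E0 s t" using rlz_split[OF A oK(1) bp] .
    obtain X' h'' dd2 e2 d3 where X': "X'\<in>Obj X" "dd2\<in>Hom X K X'" "e2\<in>Hom X X' C'"
      "rlz X X' A d3 B (cmp X A E0 B h' s) h''"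
      "cmp X B X' C' e2 h'' = cmp X B E C' y' b" "rlz X C' K (push X C' E0 K t d'') X' dd2 e2"
      "push X X' A E0 s d3 = pull X X' C' E0 e2 d''"
      by (rule ET4E[OF rs E0(4)]) blast
    from rlzD[OF X'(4)] have o3: "d3\<in>EE X X' A" "h''\<in>Hom X B X'" by auto
    have "d3 = push X X' A A (cmp X A E0 A ee s) d3" using bpd o3 A X' by simp
    also have "\<dots> = push X X' E0 A ee (push X X' A E0 s d3)"
      by (rule push_cmp) (simp_all add: A X' E0 bpd o3)
    also have "\<dots> = push X X' E0 A ee (pull X X' C' E0 e2 d'')" using X'(7) by simp
    also have "\<dots> = pull X X' C' A e2 (push X C' E0 A ee d'')"
      by (rule push_pull) (simp_all add: A X' E0 oE oh)
    finally have d3: "d3 = pull X X' C' A e2 d'" using E0(7) by simp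
    have rX: "rlz X C' K g X' dd2 e2" using X'(6) tdg by simp
    obtain w where w: "w\<in>Hom X X' X0" "e2 = cmp X X' X0 C' i w"
      using tri_fac_defl[OF rg X'(1) X'(3) tri_pull_self[OF rX]] by blast
    have e2I: "e2\<in>I X' C'" using w idl_r[OF X'(1) oK(2) oE(2) iI w(1)] by simp
    have d3I: "d3\<in>Istar X I X' A" using d3 IstarI[OF oE(2) e2I oE(3)] by simp
    have Binj: "F_injective X (Istar X I) B" unfolding F_injective_def Finj_def
    proof (intro conjI CollectI ballI)
      show "B\<in>Obj X" "idm X B \<in> Hom X B B" using oB by simp_all
      fix C dl assume C: "C\<in>Obj X" and dl: "dl\<in>Istar X I C B"
      obtain C'' m et where m: "C''\<in>Obj X" "m\<in>I C C''" "et\<in>EE X C'' B" "dl = pull X C C'' B m et"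
        using dl by (rule IstarE)
      have mH: "m\<in>Hom X C C''" using m C idl_hom by simp
      have "push X C'' B E b et \<in> EE X C'' E" using m oB oE by simp
      moreover have "EE X C'' E = {ezero X C'' E}" using Einj m(1) by blast
      ultimately have "push X C'' B E b et = ezero X C'' E" by blast
      then obtain ze where ze: "ze\<in>EE X C'' K" "et = push X C'' K B k ze" using tri_cov_exact[OF rB m(1) m(3)] by blast
      have "dl = push X C K B k (pull X C C'' K m ze)"
        using m ze push_pull[of C C'' K B m k ze] C mH oK oB by simp
      also have "\<dots> = ezero X C B" using ObK_perp[OF KK C m(1) m(2) ze(1)] C oK oB by simp
      finally show "push X C B B (idm X B) dl = ezero X C B" using C oB m mH by simp
    qed
    have mor: "etri_mor X X' A d3 B (cmp X A E0 B h' s) h'' C' A d' E e y' (idm X A) b e2"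
      unfolding etri_mor_def
    proof (intro conjI)
      show "idm X A \<in> Hom X A A" "b\<in>Hom X B E" "e2\<in>Hom X X' C'" using A oB X' by simp_all
      show "cmp X B X' C' e2 h'' = cmp X B E C' y' b" by (rule X'(5))
      show "push X X' A A (idm X A) d3 = pull X X' C' A e2 d'" using d3 o3 A X' by simp
      have "cmp X A B E b (cmp X A E0 B h' s) = cmp X A E0 E (cmp X E0 B E b h') s"
        by (rule assoc) (simp_all add: A E0 oB oh bpd oE)
      also have "\<dots> = cmp X A E0 E (cmp X E0 A E e ee) s" using E0(5) by simp
      also have "\<dots> = cmp X A A E e (cmp X A E0 A ee s)"
        by (rule assoc[symmetric]) (simp_all add: A E0 oE bpd)
      finally show "cmp X A B E b (cmp X A E0 B h' s) = cmp X A A E e (idm X A)" using bpd A oE by simp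
    qed
    have e2P: "e2\<in>Ph X (Istar X I) X' C'" using b_Ph[OF bb X'(1) oE(2)] e2I by simp
    show "\<exists>B e C y d B' x' C' y' d' b \<phi>.
        rlz X C A d B e y \<and> d \<in> Istar X I C A \<and> F_injective X (Istar X I) B
        \<and> rlz X C' A d' B' x' y'
        \<and> etri_mor X C A d B e y C' A d' B' x' y' (idm X A) b \<phi>
        \<and> \<phi> \<in> Ph X (Istar X I) C C'"
      using X'(4) d3I Binj rd' mor e2P by blast
  qed
qed

end

theorem theorem5p5:
  fixes X :: "('o, 'm, 'e) extri" and I :: "'o \<Rightarrow> 'o \<Rightarrow> 'm set"
  assumes "extriangulated X" and "ideal X I"
  shows "(enough_proj_morphisms X \<longrightarrow> (cond_a X I \<longrightarrow> cond_b X I) \<and> (cond_a' X I \<longrightarrow> cond_b X I))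
       \<and> (enough_inj_objects X \<longrightarrow> (cond_b X I \<longrightarrow> cond_c X I))
       \<and> (enough_proj_morphisms X \<longrightarrow> (cond_c X I \<longrightarrow> cond_d X I))
       \<and> (cond_d X I \<longrightarrow> cond_b X I)
       \<and> (cond_c X I \<longrightarrow> cond_a' X I)"
proof -
  interpret xti X I by unfold_locales (rule assms(1), rule assms(2))
  show ?thesis using a_to_b a'_to_a b_to_c c_to_d d_to_b c_to_a' by blast
qed

end
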